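(* Consider the complex polynomial optimization problem $\inf\{f(\mathbf z,\bar{\mathbf z}) : g_j(\mathbf z,\bar{\mathbf z})\ge 0,\ j\in[m]\}$ with $f,g_1,\dots,g_m$ Hermitian, and assume it is a quadratically constrained quadratic program, i.e. $\deg f\le 2$ and $1\le \deg g_j\le 2$ for all $j\in[m]$. Then, for relaxation order $d=1$ and any choice of chordal extension of the correlative sparsity pattern graph, the correlative-sparsity relaxation and the dense relaxation have the same optimal value: $\rho^{\mathrm{cs}}_1=\rho_1$.
   Context: Notation: $[n]=\{1,\dots,n\}$; $\mathbb N^n_t=\{\alpha\in\mathbb N^n:\sum_i\alpha_i\le t\}$. Let $\mathbf z=(z_1,\dots,z_n)$ be complex variables and $\bar{\mathbf z}$ their conjugates. A polynomial $p\in\mathbb C[\mathbf z,\bar{\mathbf z}]$ is written $p=\sum_{(\beta,\gamma)}p_{\beta,\gamma}\mathbf z^\beta\bar{\mathbf z}^\gamma$; its support is $\mathrm{supp}(p)=\{(\beta,\gamma)\in\mathbb N^n\times\mathbb N^n:p_{\beta,\gamma}\neq0\}$ and $\deg p=\max\{|\beta|+|\gamma|:(\beta,\gamma)\in\mathrm{supp}(p)\}$. $p$ is Hermitian if $p_{\beta,\gamma}=\overline{p_{\gamma,\beta}}$ for all $\beta,\gamma$. Set $d_j=\lceil\deg g_j/2\rceil$ for $j\in[m]$, $d_0=0$, $g_0=1$, $d_{\min}=\max\{\lceil\deg f/2\rceil,d_1,\dots,d_m\}$. Moments: $\mathbf y=(y_{\beta,\gamma})_{(\beta,\gamma)\in\mathbb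 N^n\times\mathbb N^n}$ is a complex sequence with $y_{\beta,\gamma}=\overline{y_{\gamma,\beta}}$, and $L_{\mathbf y}(p)=\sum_{(\beta,\gamma)}p_{\beta,\gamma}y_{\beta,\gamma}$. For $t\in\mathbb N$ and Hermitian $g$, the localizing matrix $\mathbf M_t(g\mathbf y)$ is the Hermitian matrix with rows and columns indexed by $\mathbb N^n_t$ whose $(\beta,\gamma)$ entry is $L_{\mathbf y}(g\,\mathbf z^\beta\bar{\mathbf z}^\gamma)=\sum_{(\beta',\gamma')}g_{\beta',\gamma'}y_{\beta+\beta',\gamma+\gamma'}$; the moment matrix is $\mathbf M_t(\mathbf y)=\mathbf M_t(1\cdot\mathbf y)$ (entries $y_{\beta,\gamma}$). $X\succeq0$ means $X$ is Hermitian positive semidefinite. Dense relaxation $(Q_d)$ for $d\ge d_{\min}$: minimize $L_{\mathbf y}(f)$ subject to $\mathbf M_d(\mathbf y)\succeq0$, $\mathbf M_{d-d_j}(g_j\mathbf y)\succeq0$ for $j\in[m]$, and $y_{\mathbf 0,\mathbf 0}=1$; its optimal value is $\rho_d$. Correlative sparsity: fix $d\ge d_{\min}$ and let $J'=\{j\in[m]:d_j=d\}$. For $\alpha\in\mathbb N^n$ let $\mathrm{supp}(\alpha)=\{i:\alpha_i\ne0\}$, and for a polynomial $p$ let $\mathrm{var}(p)=\bigcup_{(\beta,\gamma)\in\mathrm{supp}(p)}(\mathrm{supp}(\beta)\cup\mathrm{supp}(\gamma))$. The csp graph $G^{\mathrm{csp}}$ has nodes $[n]$ and an edge $\{i,i'\}$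 ($i\neq i'$) iff either (i) some $(\beta,\gamma)\in\mathrm{supp}(f)\cup\bigcup_{j\in J'}\mathrm{supp}(g_j)$ has $\{i,i'\}\subseteq\mathrm{supp}(\beta)\cup\mathrm{supp}(\gamma)$, or (ii) some $j\in[m]\setminus J'$ has $\{i,i'\}\subseteq\mathrm{var}(g_j)$. A chordal extension of a graph is a chordal graph on the same node set containing it. Let $I_1,\dots,I_p$ be the maximal cliques of a chordal extension of $G^{\mathrm{csp}}$, and let $J_1,\dots,J_p$ be pairwise disjoint sets with union $[m]\setminus J'$ such that $\mathrm{var}(g_j)\subseteq I_l$ for all $j\in J_l$. $\mathbf M_t(g\mathbf y,I_l)$ denotes the principal submatrix of $\mathbf M_t(g\mathbf y)$ with rows and columns indexed by those $\beta\in\mathbb N^n_t$ with $\mathrm{supp}(\beta)\subseteq I_l$ (and $\mathbf M_t(\mathbf y,I_l)=\mathbf M_t(1\cdot\mathbf y,I_l)$). The relaxation $(Q^{\mathrm{cs}}_d)$: minimize $L_{\mathbf y}(f)$ subject to $\mathbf M_d(\mathbf y,I_l)\succeq0$ for $l\in[p]$, $\mathbf M_{d-d_j}(g_j\mathbf y,I_l)\succeq0$ for $j\in J_l$, $l\in[p]$, $L_{\mathbf y}(g_j)\ge0$ for $j\in J'$, and $y_{\mathbf 0,\mathbf 0}=1$; its optimal value is $\rho^{\mathrm{cs}}_d$. *)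

theory Defs
  imports Complex_Main "HOL-Library.Extended_Real"
begin

text \<open>Variables are indexed by 0..<n (the paper's [n] shifted by one).
  A multi-index is a function nat => nat vanishing outside {0..<n}.
  A polynomial in z, conj z is its coefficient function on pairs of multi-indices.\<close>

type_synonym mindex = "nat \<Rightarrow> nat"
type_synonym cpoly = "mindex \<times> mindex \<Rightarrow> complex"
type_synonym mseq = "mindex \<times> mindex \<Rightarrow> complex"

definition mi_on :: "nat \<Rightarrow> mindex \<Rightarrow> bool" where
  "mi_on n \<alpha> \<longleftrightarrow> (\<forall>i\<ge>n. \<alpha> i = 0)"

definition mdeg :: "nat \<Rightarrow> mindex \<Rightarrow> nat" where
  "mdeg n \<alpha> = (\<Sum>i<n. \<alpha> i)"

definition msupp :: "mindex \<Rightarrow> nat set" where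
  "msupp \<alpha> = {i. \<alpha> i \<noteq> 0}"

definition psupp :: "cpoly \<Rightarrow> (mindex \<times> mindex) set" where
  "psupp p = {bg. p bg \<noteq> 0}"

definition is_cpoly :: "nat \<Rightarrow> cpoly \<Rightarrow> bool" where
  "is_cpoly n p \<longleftrightarrow> finite (psupp p) \<and> (\<forall>(b, c)\<in>psupp p. mi_on n b \<and> mi_on n c)"

definition hermitian_poly :: "cpoly \<Rightarrow> bool" where
  "hermitian_poly p \<longleftrightarrow> (\<forall>b c. p (b, c) = cnj (p (c, b)))"

definition pdeg :: "nat \<Rightarrow> cpoly \<Rightarrow> nat" where
  "pdeg n p = Max (insert 0 {mdeg n b + mdeg n c | b c. (b, c) \<in> psupp p})"

definition half_deg :: "nat \<Rightarrow> cpoly \<Rightarrow> nat" where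
  "half_deg n p = (pdeg n p + 1) div 2"

definition pvar :: "cpoly \<Rightarrow> nat set" where
  "pvar p = (\<Union>(b, c)\<in>psupp p. msupp b \<union> msupp c)"

definition one_poly :: cpoly where
  "one_poly = (\<lambda>(b, c). if b = (\<lambda>_. 0) \<and> c = (\<lambda>_. 0) then 1 else 0)"

definition hermitian_seq :: "mseq \<Rightarrow> bool" where
  "hermitian_seq y \<longleftrightarrow> (\<forall>b c. y (b, c) = cnj (y (c, b)))"

definition Lfun :: "mseq \<Rightarrow> cpoly \<Rightarrow> complex" where
  "Lfun y p = (\<Sum>(b, c)\<in>psupp p. p (b, c) * y (b, c))"

text \<open>(beta,gamma) entry of the localizing matrix: L_y(g z^beta conj(z)^gamma)\<close>
definition loc_entry :: "mseq \<Rightarrow> cpoly \<Rightarrow> mindex \<Rightarrow> mindex \<Rightarrow> complex" where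
  "loc_entry y g b c = (\<Sum>(b', c')\<in>psupp g. g (b', c') * y (\<lambda>i. b i + b' i, \<lambda>i. c i + c' i))"

definition mono_idx :: "nat \<Rightarrow> nat \<Rightarrow> nat set \<Rightarrow> mindex set" where
  "mono_idx n t I = {\<alpha>. mi_on n \<alpha> \<and> mdeg n \<alpha> \<le> t \<and> msupp \<alpha> \<subseteq> I}"

definition psd_on :: "'a set \<Rightarrow> ('a \<Rightarrow> 'a \<Rightarrow> complex) \<Rightarrow> bool" where
  "psd_on S M \<longleftrightarrow> (\<forall>a\<in>S. \<forall>b\<in>S. M a b = cnj (M b a)) \<and>
     (\<forall>v. 0 \<le> Re (\<Sum>a\<in>S. \<Sum>b\<in>S. cnj (v a) * M a b * v b))"

definition loc_psd :: "nat \<Rightarrow> nat \<Rightarrow> nat set \<Rightarrow> cpoly \<Rightarrow> mseq \<Rightarrow> bool" where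
  "loc_psd n t I g y \<longleftrightarrow> psd_on (mono_idx n t I) (\<lambda>b c. loc_entry y g b c)"

definition zero_mi :: mindex where "zero_mi = (\<lambda>_. 0)"

definition dense_feasible :: "nat \<Rightarrow> cpoly \<Rightarrow> (nat \<Rightarrow> cpoly) \<Rightarrow> nat \<Rightarrow> nat \<Rightarrow> mseq \<Rightarrow> bool" where
  "dense_feasible n f g m d y \<longleftrightarrow> hermitian_seq y \<and> y (zero_mi, zero_mi) = 1 \<and>
     loc_psd n d {..<n} one_poly y \<and>
     (\<forall>j\<in>{1..m}. loc_psd n (d - half_deg n (g j)) {..<n} (g j) y)"

definition rho_dense :: "nat \<Rightarrow> cpoly \<Rightarrow> (nat \<Rightarrow> cpoly) \<Rightarrow> nat \<Rightarrow> nat \<Rightarrow> ereal" where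
  "rho_dense n f g m d = Inf {ereal (Re (Lfun y f)) | y. dense_feasible n f g m d y}"

definition Jprime :: "nat \<Rightarrow> (nat \<Rightarrow> cpoly) \<Rightarrow> nat \<Rightarrow> nat \<Rightarrow> nat set" where
  "Jprime n g m d = {j\<in>{1..m}. half_deg n (g j) = d}"

definition csp_graph :: "nat \<Rightarrow> cpoly \<Rightarrow> (nat \<Rightarrow> cpoly) \<Rightarrow> nat \<Rightarrow> nat \<Rightarrow> nat \<Rightarrow> nat \<Rightarrow> bool" where
  "csp_graph n f g m d i i' \<longleftrightarrow> i \<noteq> i' \<and> i < n \<and> i' < n \<and>
     ((\<exists>(b, c)\<in>psupp f \<union> (\<Union>j\<in>Jprime n g m d. psupp (g j)). {i, i'} \<subseteq> msupp b \<union> msupp c) \<or>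
      (\<exists>j\<in>{1..m} - Jprime n g m d. {i, i'} \<subseteq> pvar (g j)))"

definition is_graph :: "nat \<Rightarrow> (nat \<Rightarrow> nat \<Rightarrow> bool) \<Rightarrow> bool" where
  "is_graph n E \<longleftrightarrow> (\<forall>i j. E i j \<longrightarrow> i < n \<and> j < n \<and> i \<noteq> j \<and> E j i)"

definition chordal :: "nat \<Rightarrow> (nat \<Rightarrow> nat \<Rightarrow> bool) \<Rightarrow> bool" where
  "chordal n E \<longleftrightarrow> (\<forall>vs. distinct vs \<and> length vs \<ge> 4 \<and> set vs \<subseteq> {..<n} \<and>
       (\<forall>k<length vs. E (vs ! k) (vs ! ((k + 1) mod length vs))) \<longrightarrow>
       (\<exists>k l. k < length vs \<and> l < length vs \<and> k \<noteq> l \<and>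
          l \<noteq> (k + 1) mod length vs \<and> k \<noteq> (l + 1) mod length vs \<and> E (vs ! k) (vs ! l)))"

definition chordal_extension :: "nat \<Rightarrow> (nat \<Rightarrow> nat \<Rightarrow> bool) \<Rightarrow> (nat \<Rightarrow> nat \<Rightarrow> bool) \<Rightarrow> bool" where
  "chordal_extension n G H \<longleftrightarrow> is_graph n H \<and> (\<forall>i j. G i j \<longrightarrow> H i j) \<and> chordal n H"

definition is_clique :: "nat \<Rightarrow> (nat \<Rightarrow> nat \<Rightarrow> bool) \<Rightarrow> nat set \<Rightarrow> bool" where
  "is_clique n H C \<longleftrightarrow> C \<subseteq> {..<n} \<and> (\<forall>i\<in>C. \<forall>j\<in>C. i \<noteq> j \<longrightarrow> H i j)"

definition max_cliques :: "nat \<Rightarrow> (nat \<Rightarrow> nat \<Rightarrow> bool) \<Rightarrow> nat set set" where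
  "max_cliques n H = {C. is_clique n H C \<and> (\<forall>C'. is_clique n H C' \<and> C \<subseteq> C' \<longrightarrow> C' = C)}"

text \<open>The sets J_l are encoded by an assignment asg mapping each j in [m] - J' to the clique I_l
  with j in J_l.\<close>
definition valid_assignment :: "nat \<Rightarrow> (nat \<Rightarrow> cpoly) \<Rightarrow> nat \<Rightarrow> nat \<Rightarrow> (nat \<Rightarrow> nat \<Rightarrow> bool) \<Rightarrow> (nat \<Rightarrow> nat set) \<Rightarrow> bool" where
  "valid_assignment n g m d H asg \<longleftrightarrow>
     (\<forall>j\<in>{1..m} - Jprime n g m d. asg j \<in> max_cliques n H \<and> pvar (g j) \<subseteq> asg j)"

definition cs_feasible :: "nat \<Rightarrow> cpoly \<Rightarrow> (nat \<Rightarrow> cpoly) \<Rightarrow> nat \<Rightarrow> nat \<Rightarrow> (nat \<Rightarrow> nat \<Rightarrow> bool) \<Rightarrow> (nat \<Rightarrow> nat set) \<Rightarrow> mseq \<Rightarrow> bool" where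
  "cs_feasible n f g m d H asg y \<longleftrightarrow> hermitian_seq y \<and> y (zero_mi, zero_mi) = 1 \<and>
     (\<forall>I\<in>max_cliques n H. loc_psd n d I one_poly y) \<and>
     (\<forall>j\<in>{1..m} - Jprime n g m d. loc_psd n (d - half_deg n (g j)) (asg j) (g j) y) \<and>
     (\<forall>j\<in>Jprime n g m d. Im (Lfun y (g j)) = 0 \<and> 0 \<le> Re (Lfun y (g j)))"

definition rho_cs :: "nat \<Rightarrow> cpoly \<Rightarrow> (nat \<Rightarrow> cpoly) \<Rightarrow> nat \<Rightarrow> nat \<Rightarrow> (nat \<Rightarrow> nat \<Rightarrow> bool) \<Rightarrow> (nat \<Rightarrow> nat set) \<Rightarrow> ereal" where
  "rho_cs n f g m d H asg = Inf {ereal (Re (Lfun y f)) | y. cs_feasible n f g m d H asg y}"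

end

theory Submission
  imports Defs
begin

definition qf :: "'a set \<Rightarrow> ('a \<Rightarrow> 'a \<Rightarrow> complex) \<Rightarrow> ('a \<Rightarrow> complex) \<Rightarrow> complex" where
  "qf S M v = (\<Sum>a\<in>S. \<Sum>b\<in>S. cnj (v a) * M a b * v b)"

lemma psd_onI:
  assumes "\<And>a b. a \<in> S \<Longrightarrow> b \<in> S \<Longrightarrow> M a b = cnj (M b a)"
    and "\<And>v. 0 \<le> Re (qf S M v)"
  shows "psd_on S M"
  using assms unfolding psd_on_def qf_def by blast

lemma psd_on_herm: "psd_on S M \<Longrightarrow> a \<in> S \<Longrightarrow> b \<in> S \<Longrightarrow> M a b = cnj (M b a)"
  unfolding psd_on_def by blast

lemma psd_on_qf: "psd_on S M \<Longrightarrow> 0 \<le> Re (qf S M v)"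
  unfolding psd_on_def qf_def by blast

lemma qf_restrict:
  assumes "finite S" "T \<subseteq> S"
  shows "qf S M (\<lambda>a. if a \<in> T then v a else 0) = qf T M v"
proof -
  have TS: "S \<inter> T = T" using assms(2) by blast
  have "qf S M (\<lambda>a. if a \<in> T then v a else 0) =
     (\<Sum>a\<in>S. if a \<in> T then (\<Sum>b\<in>S. if b \<in> T then cnj (v a) * M a b * v b else 0) else 0)"
    unfolding qf_def
  proof (intro sum.cong refl)
    fix a show "(\<Sum>b\<in>S. cnj (if a \<in> T then v a else 0) * M a b * (if b \<in> T then v b else 0)) =
      (if a \<in> T then (\<Sum>b\<in>S. if b \<in> T then cnj (v a) * M a b * v b else 0) else 0)"
      by (cases "a \<in> T") (auto intro: sum.cong)
  qed
  also have "\<dots> = (\<Sum>a\<in>S. if a \<in> T then (\<Sum>b\<in>T. cnj (v a) * M a b * v b) else 0)"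
  proof (intro sum.cong refl)
    fix a show "(if a \<in> T then (\<Sum>b\<in>S. if b \<in> T then cnj (v a) * M a b * v b else 0) else 0)
      = (if a \<in> T then (\<Sum>b\<in>T. cnj (v a) * M a b * v b) else 0)"
      using sum.inter_restrict[OF assms(1), of "\<lambda>b. cnj (v a) * M a b * v b" T] TS by simp
  qed
  also have "\<dots> = qf T M v"
    unfolding qf_def using sum.inter_restrict[OF assms(1), of "\<lambda>a. \<Sum>b\<in>T. cnj (v a) * M a b * v b" T] unfolding TS by (rule sym)
  finally show ?thesis .
qed

lemma psd_on_subset:
  assumes "psd_on S M" "finite S" "T \<subseteq> S"
  shows "psd_on T M"
proof (rule psd_onI)
  fix a b assume "a \<in> T" "b \<in> T" then show "M a b = cnj (M b a)"
    using psd_on_herm[OF assms(1)] assms(3) by blast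
next
  fix v
  have "0 \<le> Re (qf S M (\<lambda>a. if a \<in> T then v a else 0))" by (rule psd_on_qf[OF assms(1)])
  then show "0 \<le> Re (qf T M v)" using qf_restrict[OF assms(2,3)] by simp
qed

lemma qf_two:
  assumes "finite S" "k \<in> S" "j \<in> S" "k \<noteq> j"
  shows "qf S M (\<lambda>a. if a = k then x else if a = j then y else 0) =
    cnj x * M k k * x + cnj x * M k j * y + cnj y * M j k * x + cnj y * M j j * y"
proof -
  have "qf S M (\<lambda>a. if a = k then x else if a = j then y else 0) =
      qf {k, j} M (\<lambda>a. if a = k then x else if a = j then y else 0)"
  proof -
    have e: "(\<lambda>a. if a \<in> {k,j} then (if a = k then x else if a = j then y else 0) else 0) =
       (\<lambda>a. if a = k then x else if a = j then y else 0)" by (auto simp: fun_eq_iff)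
    show ?thesis using qf_restrict[OF assms(1), of "{k,j}" M "\<lambda>a. if a = k then x else if a = j then y else 0"] assms
      unfolding e by simp
  qed
  also have "\<dots> = cnj x * M k k * x + cnj x * M k j * y + cnj y * M j k * x + cnj y * M j j * y"
    using assms(4) unfolding qf_def by (simp add: algebra_simps)
  finally show ?thesis .
qed

lemma qf_one:
  assumes "finite S" "k \<in> S"
  shows "qf S M (\<lambda>a. if a = k then x else 0) = cnj x * M k k * x"
proof -
  have "qf S M (\<lambda>a. if a = k then x else 0) = qf {k} M (\<lambda>a. if a = k then x else 0)"
  proof -
    have e: "(\<lambda>a. if a \<in> {k} then (if a = k then x else 0) else 0) =
       (\<lambda>a. if a = k then x else 0)" by (auto simp: fun_eq_iff)
    show ?thesis using qf_restrict[OF assms(1), of "{k}" M "\<lambda>a. if a = k then x else 0"] assms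
      unfolding e by simp
  qed
  also have "\<dots> = cnj x * M k k * x" unfolding qf_def by simp
  finally show ?thesis .
qed

lemma psd_diag:
  assumes "psd_on S M" "finite S" "k \<in> S"
  shows "Im (M k k) = 0" "0 \<le> Re (M k k)"
proof -
  show "Im (M k k) = 0" using psd_on_herm[OF assms(1) assms(3) assms(3)]
  proof -
    have "Im (M k k) = Im (cnj (M k k))" using psd_on_herm[OF assms(1) assms(3) assms(3)] by simp
    then show ?thesis by simp
  qed
  have "0 \<le> Re (qf S M (\<lambda>a. if a = k then 1 else 0))" using psd_on_qf[OF assms(1)] .
  then show "0 \<le> Re (M k k)" using qf_one[OF assms(2,3)] by simp
qed

lemma psd_zero_row:
  assumes "psd_on S M" "finite S" "k \<in> S" "j \<in> S" "M k k = 0"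
  shows "M k j = 0"
proof (rule ccontr)
  assume ne: "M k j \<noteq> 0"
  then have kj: "k \<noteq> j" using assms by auto
  define c where "c = M k j"
  define t where "t = (Re (M j j) + 1) / (2 * (cmod c)^2)"
  have cpos: "0 < (cmod c)^2" using ne c_def by simp
  define x where "x = - (of_real t * c)"
  have h: "M j k = cnj c" using psd_on_herm[OF assms(1) assms(4,3)] c_def by simp
  have imj: "Im (M j j) = 0" using psd_diag[OF assms(1,2,4)] by simp
  have "0 \<le> Re (qf S M (\<lambda>a. if a = k then x else if a = j then 1 else 0))"
    using psd_on_qf[OF assms(1)] .
  also have "qf S M (\<lambda>a. if a = k then x else if a = j then 1 else 0) =
      cnj x * c + cnj c * x + M j j"
    using qf_two[OF assms(2,3,4) kj] assms(5) h c_def by simp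
  also have "Re (cnj x * c + cnj c * x + M j j) = - 2 * t * ((Re c)^2 + (Im c)^2) + Re (M j j)"
    unfolding x_def by (simp add: algebra_simps power2_eq_square)
  also have "\<dots> = - 2 * t * (cmod c)^2 + Re (M j j)" by (simp add: cmod_power2)
  also have "\<dots> = -1" unfolding t_def using cpos by (simp add: field_simps)
  finally show False by simp
qed

lemma psd_schur:
  assumes psd: "psd_on (insert k T) B" and fin: "finite T" and kT: "k \<notin> T" and d0: "B k k \<noteq> 0"
  shows "psd_on T (\<lambda>a b. B a b - B a k * B k b / B k k)"
proof -
  define d where "d = B k k"
  have kin: "k \<in> insert k T" by simp
  have dr: "cnj d = d" using psd_on_herm[OF psd kin kin] d_def by simp
  have her: "\<And>a b. a \<in> insert k T \<Longrightarrow> b \<in> insert k T \<Longrightarrow> B a b = cnj (B b a)"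
    using psd_on_herm[OF psd] by blast
  show ?thesis
  proof (rule psd_onI)
    fix a b assume a: "a \<in> T" and b: "b \<in> T"
    have h1: "B b a = cnj (B a b)" using her[of b a] a b by blast
    have h2: "B b k = cnj (B k b)" using her[of b k] b by blast
    have h3: "B k a = cnj (B a k)" using her[of k a] a by blast
    show "B a b - B a k * B k b / B k k = cnj (B b a - B b k * B k a / B k k)"
      unfolding d_def[symmetric] h1 h2 h3 using dr by (simp add: mult.commute)
  next
    fix v
    define r where "r = (\<Sum>b\<in>T. B k b * v b)"
    define w where "w = (\<lambda>a. if a = k then - r / d else v a)"
    have wT: "\<And>a. a \<in> T \<Longrightarrow> w a = v a" using kT unfolding w_def by auto
    have wk: "w k = - r / d" unfolding w_def by simp
    have s1: "(\<Sum>b\<in>insert k T. cnj (w k) * B k b * w b) = 0"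
    proof -
      have "(\<Sum>b\<in>insert k T. cnj (w k) * B k b * w b) = cnj (w k) * B k k * w k + (\<Sum>b\<in>T. cnj (w k) * B k b * w b)"
        using fin kT by (simp add: sum.insert)
      also have "(\<Sum>b\<in>T. cnj (w k) * B k b * w b) = cnj (w k) * r"
        unfolding r_def sum_distrib_left using wT by (intro sum.cong) (auto simp: mult.assoc)
      also have "cnj (w k) * B k k * w k + cnj (w k) * r = cnj (w k) * (d * w k + r)"
        unfolding d_def by (simp add: algebra_simps)
      also have "d * w k + r = 0" unfolding wk using d0 d_def by simp
      finally show ?thesis by simp
    qed
    have s2: "\<And>a. a \<in> T \<Longrightarrow> (\<Sum>b\<in>insert k T. cnj (w a) * B a b * w b) =
        cnj (v a) * B a k * (- r / d) + (\<Sum>b\<in>T. cnj (v a) * B a b * v b)"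
    proof -
      fix a assume a: "a \<in> T"
      have "(\<Sum>b\<in>insert k T. cnj (w a) * B a b * w b) = cnj (w a) * B a k * w k + (\<Sum>b\<in>T. cnj (w a) * B a b * w b)"
        using fin kT by (simp add: sum.insert)
      also have "(\<Sum>b\<in>T. cnj (w a) * B a b * w b) = (\<Sum>b\<in>T. cnj (v a) * B a b * v b)"
        using wT a by (intro sum.cong) auto
      finally show "(\<Sum>b\<in>insert k T. cnj (w a) * B a b * w b) =
        cnj (v a) * B a k * (- r / d) + (\<Sum>b\<in>T. cnj (v a) * B a b * v b)" using wT[OF a] wk by simp
    qed
    have "qf (insert k T) B w = (\<Sum>b\<in>insert k T. cnj (w k) * B k b * w b) +
        (\<Sum>a\<in>T. \<Sum>b\<in>insert k T. cnj (w a) * B a b * w b)"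
      unfolding qf_def using fin kT by (simp add: sum.insert)
    also have "\<dots> = (\<Sum>a\<in>T. cnj (v a) * B a k * (- r / d) + (\<Sum>b\<in>T. cnj (v a) * B a b * v b))"
      unfolding s1 using s2 by (simp cong: sum.cong)
    also have "\<dots> = qf T (\<lambda>a b. B a b - B a k * B k b / B k k) v"
    proof -
      have "qf T (\<lambda>a b. B a b - B a k * B k b / B k k) v =
          (\<Sum>a\<in>T. (\<Sum>b\<in>T. cnj (v a) * B a b * v b) - cnj (v a) * B a k / d * (\<Sum>b\<in>T. B k b * v b))"
        unfolding qf_def d_def[symmetric]
      proof (intro sum.cong refl)
        fix a
        have "(\<Sum>b\<in>T. cnj (v a) * (B a b - B a k * B k b / d) * v b) =
            (\<Sum>b\<in>T. cnj (v a) * B a b * v b - cnj (v a) * B a k / d * (B k b * v b))"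
          by (intro sum.cong refl) (simp add: algebra_simps)
        also have "\<dots> = (\<Sum>b\<in>T. cnj (v a) * B a b * v b) - cnj (v a) * B a k / d * (\<Sum>b\<in>T. B k b * v b)"
          by (simp add: sum_subtractf sum_distrib_left)
        finally show "(\<Sum>b\<in>T. cnj (v a) * (B a b - B a k * B k b / d) * v b) =
            (\<Sum>b\<in>T. cnj (v a) * B a b * v b) - cnj (v a) * B a k / d * (\<Sum>b\<in>T. B k b * v b)" .
      qed
      then show ?thesis unfolding r_def[symmetric] by (simp add: algebra_simps)
    qed
    finally have "qf (insert k T) B w = qf T (\<lambda>a b. B a b - B a k * B k b / B k k) v" .
    then show "0 \<le> Re (qf T (\<lambda>a b. B a b - B a k * B k b / B k k) v)"
      using psd_on_qf[OF psd, of w] by simp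
  qed
qed

lemma psd_solve:
  assumes "finite K" "s \<notin> K" "psd_on (insert s K) B"
  shows "\<exists>\<alpha>. \<forall>k\<in>K. (\<Sum>k'\<in>K. B k k' * \<alpha> k') = B k s"
  using assms
proof (induction K arbitrary: B rule: finite_induct)
  case empty then show ?case by simp
next
  case (insert k0 K B)
  have sK: "s \<notin> K" and sk0: "s \<noteq> k0" using insert.prems by auto
  have finS: "finite (insert s (insert k0 K))" using insert.hyps by simp
  have psd: "psd_on (insert s (insert k0 K)) B" using insert.prems by simp
  show ?case
  proof (cases "B k0 k0 = 0")
    case True
    have z1: "\<And>j. j \<in> insert s (insert k0 K) \<Longrightarrow> B k0 j = 0"
      using psd_zero_row[OF psd finS _ _ True] by simp
    have z2: "\<And>j. j \<in> insert s (insert k0 K) \<Longrightarrow> B j k0 = 0"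
    proof -
      fix j assume j: "j \<in> insert s (insert k0 K)"
      have "B j k0 = cnj (B k0 j)" using psd_on_herm[OF psd j] by simp
      then show "B j k0 = 0" using z1[OF j] by simp
    qed
    have "psd_on (insert s K) B" using psd_on_subset[OF psd finS] by auto
    then obtain \<alpha> where \<alpha>: "\<forall>k\<in>K. (\<Sum>k'\<in>K. B k k' * \<alpha> k') = B k s"
      using insert.IH sK by blast
    define \<alpha>' where "\<alpha>' = \<alpha>(k0 := 0)"
    have eq: "\<And>k. (\<Sum>k'\<in>insert k0 K. B k k' * \<alpha>' k') = (\<Sum>k'\<in>K. B k k' * \<alpha> k')"
    proof -
      fix k
      have "(\<Sum>k'\<in>insert k0 K. B k k' * \<alpha>' k') = B k k0 * \<alpha>' k0 + (\<Sum>k'\<in>K. B k k' * \<alpha>' k')"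
        using insert.hyps by (simp add: sum.insert)
      also have "(\<Sum>k'\<in>K. B k k' * \<alpha>' k') = (\<Sum>k'\<in>K. B k k' * \<alpha> k')"
        using insert.hyps unfolding \<alpha>'_def by (intro sum.cong) auto
      finally show "(\<Sum>k'\<in>insert k0 K. B k k' * \<alpha>' k') = (\<Sum>k'\<in>K. B k k' * \<alpha> k')"
        unfolding \<alpha>'_def by simp
    qed
    show ?thesis
    proof (intro exI[of _ \<alpha>'] ballI)
      fix k assume k: "k \<in> insert k0 K"
      show "(\<Sum>k'\<in>insert k0 K. B k k' * \<alpha>' k') = B k s"
      proof (cases "k = k0")
        case True
        have "(\<Sum>k'\<in>K. B k0 k' * \<alpha> k') = 0" using z1 by (intro sum.neutral) auto
        then show ?thesis unfolding eq True using z1[of s] by simp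
      next
        case False then show ?thesis unfolding eq using \<alpha> k by auto
      qed
    qed
  next
    case False
    define d where "d = B k0 k0"
    define B' where "B' = (\<lambda>a b. B a b - B a k0 * B k0 b / B k0 k0)"
    have psd': "psd_on (insert s K) B'"
      unfolding B'_def
      by (rule psd_schur) (use psd insert.hyps sk0 False in \<open>auto simp: insert_commute\<close>)
    then obtain \<alpha> where \<alpha>: "\<forall>k\<in>K. (\<Sum>k'\<in>K. B' k k' * \<alpha> k') = B' k s"
      using insert.IH sK by blast
    define \<sigma> where "\<sigma> = (\<Sum>k'\<in>K. B k0 k' * \<alpha> k')"
    define \<alpha>' where "\<alpha>' = \<alpha>(k0 := (B k0 s - \<sigma>) / d)"
    have eq: "\<And>k. (\<Sum>k'\<in>insert k0 K. B k k' * \<alpha>' k') = B k k0 * ((B k0 s - \<sigma>) / d) + (\<Sum>k'\<in>K. B k k' * \<alpha> k')"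
    proof -
      fix k
      have "(\<Sum>k'\<in>insert k0 K. B k k' * \<alpha>' k') = B k k0 * \<alpha>' k0 + (\<Sum>k'\<in>K. B k k' * \<alpha>' k')"
        using insert.hyps by (simp add: sum.insert)
      also have "(\<Sum>k'\<in>K. B k k' * \<alpha>' k') = (\<Sum>k'\<in>K. B k k' * \<alpha> k')"
        using insert.hyps unfolding \<alpha>'_def by (intro sum.cong) auto
      finally show "(\<Sum>k'\<in>insert k0 K. B k k' * \<alpha>' k') = B k k0 * ((B k0 s - \<sigma>) / d) + (\<Sum>k'\<in>K. B k k' * \<alpha> k')"
        unfolding \<alpha>'_def by simp
    qed
    show ?thesis
    proof (intro exI[of _ \<alpha>'] ballI)
      fix k assume k: "k \<in> insert k0 K"
      show "(\<Sum>k'\<in>insert k0 K. B k k' * \<alpha>' k') = B k s"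
      proof (cases "k = k0")
        case True
        then show ?thesis unfolding eq True \<sigma>_def[symmetric] using False d_def by (simp add: field_simps)
      next
        case kk: False
        then have kK: "k \<in> K" using k by simp
        have "(\<Sum>k'\<in>K. B k k' * \<alpha> k') = (\<Sum>k'\<in>K. B' k k' * \<alpha> k' + B k k0 / d * (B k0 k' * \<alpha> k'))"
          unfolding B'_def d_def by (intro sum.cong refl) (simp add: algebra_simps)
        also have "\<dots> = B' k s + B k k0 / d * \<sigma>"
          unfolding \<sigma>_def sum.distrib sum_distrib_left[symmetric] using \<alpha> kK by simp
        finally have "(\<Sum>k'\<in>K. B k k' * \<alpha> k') = B' k s + B k k0 / d * \<sigma>" .
        then show ?thesis unfolding eq B'_def d_def[symmetric] using False d_def
          by (simp add: field_simps)
      qed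
    qed
  qed
qed

lemma qf_expand:
  "qf X M (\<lambda>a. p a + t * q a) = qf X M p + t * (\<Sum>a\<in>X. cnj (p a) * (\<Sum>b\<in>X. M a b * q b))
     + cnj t * (\<Sum>b\<in>X. (\<Sum>a\<in>X. cnj (q a) * M a b) * p b)
     + cnj t * t * (\<Sum>a\<in>X. cnj (q a) * (\<Sum>b\<in>X. M a b * q b))"
proof -
  have "qf X M (\<lambda>a. p a + t * q a) = (\<Sum>a\<in>X. \<Sum>b\<in>X. cnj (p a) * M a b * p b + t * (cnj (p a) * (M a b * q b))
     + cnj t * (cnj (q a) * M a b * p b) + cnj t * t * (cnj (q a) * (M a b * q b)))"
    unfolding qf_def by (intro sum.cong refl) (simp add: algebra_simps)
  also have "\<dots> = qf X M p + t * (\<Sum>a\<in>X. cnj (p a) * (\<Sum>b\<in>X. M a b * q b))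
     + cnj t * (\<Sum>a\<in>X. \<Sum>b\<in>X. cnj (q a) * M a b * p b)
     + cnj t * t * (\<Sum>a\<in>X. cnj (q a) * (\<Sum>b\<in>X. M a b * q b))"
    unfolding qf_def sum.distrib sum_distrib_left by simp
  also have "(\<Sum>a\<in>X. \<Sum>b\<in>X. cnj (q a) * M a b * p b) = (\<Sum>b\<in>X. (\<Sum>a\<in>X. cnj (q a) * M a b) * p b)"
    by (subst sum.swap) (simp add: sum_distrib_right)
  finally show ?thesis .
qed

lemma psd_extend:
  assumes finX: "finite X" and sX: "s \<notin> X" and KX: "K \<subseteq> X"
    and M: "psd_on X M" and B: "psd_on (insert s K) B"
    and agree: "\<forall>a\<in>K. \<forall>b\<in>K. M a b = B a b"
  shows "\<exists>A. psd_on (insert s X) A \<and> (\<forall>a\<in>X. \<forall>b\<in>X. A a b = M a b) \<and>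
     (\<forall>a\<in>insert s K. \<forall>b\<in>insert s K. A a b = B a b)"
proof -
  have finK: "finite K" using finX KX finite_subset by blast
  have sK: "s \<notin> K" using sX KX by blast
  obtain \<alpha> where \<alpha>: "\<forall>k\<in>K. (\<Sum>k'\<in>K. B k k' * \<alpha> k') = B k s"
    using psd_solve[OF finK sK B] by blast
  define col where "col = (\<lambda>a. \<Sum>k\<in>K. M a k * \<alpha> k)"
  have colK: "\<And>a. a \<in> K \<Longrightarrow> col a = B a s"
  proof -
    fix a assume a: "a \<in> K"
    have "col a = (\<Sum>k\<in>K. B a k * \<alpha> k)" unfolding col_def using agree a by (intro sum.cong) auto
    then show "col a = B a s" using \<alpha> a by simp
  qed
  have ssin: "s \<in> insert s K" by simp
  have Bss: "B s s = cnj (B s s)" using psd_on_herm[OF B ssin ssin] .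
  have BsK: "\<And>b. b \<in> K \<Longrightarrow> B s b = cnj (col b)"
  proof -
    fix b assume b: "b \<in> K"
    then have "b \<in> insert s K" by simp
    from psd_on_herm[OF B ssin this] show "B s b = cnj (col b)" using colK[OF b] by simp
  qed
  have Mh: "\<And>a b. a \<in> X \<Longrightarrow> b \<in> X \<Longrightarrow> M a b = cnj (M b a)" using psd_on_herm[OF M] by blast
  define A where "A = (\<lambda>a b. if a = s then (if b = s then B s s else cnj (col b)) else (if b = s then col a else M a b))"
  have agX: "\<forall>a\<in>X. \<forall>b\<in>X. A a b = M a b" unfolding A_def using sX by auto
  have agK: "\<forall>a\<in>insert s K. \<forall>b\<in>insert s K. A a b = B a b"
  proof (intro ballI)
    fix a b assume a: "a \<in> insert s K" and b: "b \<in> insert s K"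
    show "A a b = B a b"
    proof (cases "a = s")
      case True
      then show ?thesis using b BsK unfolding A_def by auto
    next
      case False
      then have aK: "a \<in> K" using a by simp
      show ?thesis
      proof (cases "b = s")
        case True then show ?thesis using False colK[OF aK] unfolding A_def by simp
      next
        case False2: False
        then have "b \<in> K" using b by simp
        then show ?thesis using False False2 agree aK unfolding A_def by simp
      qed
    qed
  qed
  have psdA: "psd_on (insert s X) A"
  proof (rule psd_onI)
    fix a b assume a: "a \<in> insert s X" and b: "b \<in> insert s X"
    show "A a b = cnj (A b a)"
    proof (cases "a = s")
      case True
      then show ?thesis using Bss unfolding A_def by auto
    next
      case False
      then have aX: "a \<in> X" using a by simp
      show ?thesis
      proof (cases "b = s")
        case True then show ?thesis using False unfolding A_def by simp
      next
        case False2: False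
        then have "b \<in> X" using b by simp
        then show ?thesis using False False2 Mh[OF aX] unfolding A_def by simp
      qed
    qed
  next
    fix v :: "'a \<Rightarrow> complex"
    define t where "t = v s"
    define ax where "ax = (\<lambda>a. if a \<in> K then \<alpha> a else 0)"
    define \<beta> where "\<beta> = (\<Sum>a\<in>K. cnj (\<alpha> a) * col a)"
    have KXi: "X \<inter> K = K" using KX by blast
    have c1: "\<And>a. (\<Sum>b\<in>X. M a b * ax b) = col a"
    proof -
      fix a
      have "(\<Sum>b\<in>X. M a b * ax b) = (\<Sum>b\<in>X. if b \<in> K then M a b * \<alpha> b else 0)"
        unfolding ax_def by (intro sum.cong) auto
      also have "\<dots> = col a" unfolding col_def
        using sum.inter_restrict[OF finX, of "\<lambda>b. M a b * \<alpha> b" K] KXi by simp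
      finally show "(\<Sum>b\<in>X. M a b * ax b) = col a" .
    qed
    have c2: "\<And>b. b \<in> X \<Longrightarrow> (\<Sum>a\<in>X. cnj (ax a) * M a b) = cnj (col b)"
    proof -
      fix b assume b: "b \<in> X"
      have "(\<Sum>a\<in>X. cnj (ax a) * M a b) = (\<Sum>a\<in>X. if a \<in> K then cnj (M b a * \<alpha> a) else 0)"
        unfolding ax_def using Mh[OF _ b] KX by (intro sum.cong) auto
      also have "\<dots> = (\<Sum>a\<in>K. cnj (M b a * \<alpha> a))"
        using sum.inter_restrict[OF finX, of "\<lambda>a. cnj (M b a * \<alpha> a)" K] KXi by simp
      also have "\<dots> = cnj (col b)" unfolding col_def by simp
      finally show "(\<Sum>a\<in>X. cnj (ax a) * M a b) = cnj (col b)" .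
    qed
    have c3: "(\<Sum>a\<in>X. cnj (ax a) * col a) = \<beta>"
    proof -
      have "(\<Sum>a\<in>X. cnj (ax a) * col a) = (\<Sum>a\<in>X. if a \<in> K then cnj (\<alpha> a) * col a else 0)"
        unfolding ax_def by (intro sum.cong) auto
      also have "\<dots> = \<beta>" unfolding \<beta>_def
        using sum.inter_restrict[OF finX, of "\<lambda>a. cnj (\<alpha> a) * col a" K] KXi by simp
      finally show ?thesis .
    qed
    define u where "u = (\<lambda>a. v a + t * ax a)"
    have qu: "qf X M u = qf X M v + t * (\<Sum>a\<in>X. cnj (v a) * col a)
       + cnj t * (\<Sum>b\<in>X. cnj (col b) * v b) + cnj t * t * \<beta>"
    proof -
      have e2: "(\<Sum>b\<in>X. (\<Sum>a\<in>X. cnj (ax a) * M a b) * v b) = (\<Sum>b\<in>X. cnj (col b) * v b)"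
        using c2 by (intro sum.cong) auto
      show ?thesis unfolding u_def qf_expand c1 e2 c3 ..
    qed
    have qA: "qf (insert s X) A v = cnj t * B s s * t + cnj t * (\<Sum>b\<in>X. cnj (col b) * v b)
       + t * (\<Sum>a\<in>X. cnj (v a) * col a) + qf X M v"
    proof -
      have r1: "(\<Sum>b\<in>insert s X. cnj (v s) * A s b * v b) = cnj t * B s s * t + cnj t * (\<Sum>b\<in>X. cnj (col b) * v b)"
      proof -
        have "(\<Sum>b\<in>insert s X. cnj (v s) * A s b * v b) = cnj (v s) * A s s * v s + (\<Sum>b\<in>X. cnj (v s) * A s b * v b)"
          using finX sX by (simp add: sum.insert)
        also have "(\<Sum>b\<in>X. cnj (v s) * A s b * v b) = cnj t * (\<Sum>b\<in>X. cnj (col b) * v b)"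
          unfolding sum_distrib_left t_def A_def using sX by (intro sum.cong) (auto simp: mult.assoc)
        finally show ?thesis unfolding A_def t_def by simp
      qed
      have r2: "\<And>a. a \<in> X \<Longrightarrow> (\<Sum>b\<in>insert s X. cnj (v a) * A a b * v b) = t * (cnj (v a) * col a) + (\<Sum>b\<in>X. cnj (v a) * M a b * v b)"
      proof -
        fix a assume a: "a \<in> X"
        then have as: "a \<noteq> s" using sX by auto
        have "(\<Sum>b\<in>insert s X. cnj (v a) * A a b * v b) = cnj (v a) * A a s * v s + (\<Sum>b\<in>X. cnj (v a) * A a b * v b)"
          using finX sX by (simp add: sum.insert)
        also have "(\<Sum>b\<in>X. cnj (v a) * A a b * v b) = (\<Sum>b\<in>X. cnj (v a) * M a b * v b)"
          using agX a by (intro sum.cong) auto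
        finally show "(\<Sum>b\<in>insert s X. cnj (v a) * A a b * v b) = t * (cnj (v a) * col a) + (\<Sum>b\<in>X. cnj (v a) * M a b * v b)"
          unfolding A_def t_def using as by (simp add: algebra_simps)
      qed
      have "qf (insert s X) A v = (\<Sum>b\<in>insert s X. cnj (v s) * A s b * v b) + (\<Sum>a\<in>X. \<Sum>b\<in>insert s X. cnj (v a) * A a b * v b)"
        unfolding qf_def using finX sX by (simp add: sum.insert)
      also have "(\<Sum>a\<in>X. \<Sum>b\<in>insert s X. cnj (v a) * A a b * v b) = (\<Sum>a\<in>X. t * (cnj (v a) * col a) + (\<Sum>b\<in>X. cnj (v a) * M a b * v b))"
        using r2 by (intro sum.cong) auto
      also have "\<dots> = t * (\<Sum>a\<in>X. cnj (v a) * col a) + qf X M v"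
        unfolding qf_def sum.distrib sum_distrib_left ..
      finally show ?thesis unfolding r1 by (simp add: algebra_simps)
    qed
    have key: "qf (insert s X) A v = qf X M u + cnj t * t * (B s s - \<beta>)"
      unfolding qA qu by (simp add: algebra_simps)
    define w where "w = (\<lambda>a. if a = s then 1 else - \<alpha> a)"
    have qB: "qf (insert s K) B w = B s s - cnj \<beta>"
    proof -
      have r1: "(\<Sum>b\<in>insert s K. cnj (w s) * B s b * w b) = B s s - cnj \<beta>"
      proof -
        have "(\<Sum>b\<in>insert s K. cnj (w s) * B s b * w b) = B s s + (\<Sum>b\<in>K. cnj (w s) * B s b * w b)"
          using finK sK unfolding w_def by (simp add: sum.insert)
        also have "(\<Sum>b\<in>K. cnj (w s) * B s b * w b) = - (\<Sum>b\<in>K. cnj (cnj (\<alpha> b) * col b))"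
          unfolding sum_negf[symmetric] w_def using sK BsK by (intro sum.cong) auto
        finally show ?thesis unfolding \<beta>_def by simp
      qed
      have r2: "\<And>a. a \<in> K \<Longrightarrow> (\<Sum>b\<in>insert s K. cnj (w a) * B a b * w b) = 0"
      proof -
        fix a assume a: "a \<in> K"
        then have as: "a \<noteq> s" using sK by auto
        have "(\<Sum>b\<in>insert s K. cnj (w a) * B a b * w b) = cnj (w a) * B a s * w s + (\<Sum>b\<in>K. cnj (w a) * B a b * w b)"
          using finK sK by (simp add: sum.insert)
        also have "(\<Sum>b\<in>K. cnj (w a) * B a b * w b) = cnj (\<alpha> a) * (\<Sum>b\<in>K. B a b * \<alpha> b)"
          unfolding sum_distrib_left w_def using as sK by (intro sum.cong) auto
        also have "\<dots> = cnj (\<alpha> a) * B a s" using \<alpha> a by simp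
        finally show "(\<Sum>b\<in>insert s K. cnj (w a) * B a b * w b) = 0"
          unfolding w_def using as by simp
      qed
      have "qf (insert s K) B w = (\<Sum>b\<in>insert s K. cnj (w s) * B s b * w b) + (\<Sum>a\<in>K. \<Sum>b\<in>insert s K. cnj (w a) * B a b * w b)"
        unfolding qf_def using finK sK by (simp add: sum.insert)
      also have "(\<Sum>a\<in>K. \<Sum>b\<in>insert s K. cnj (w a) * B a b * w b) = 0"
        using r2 by (intro sum.neutral) auto
      finally show ?thesis unfolding r1 by simp
    qed
    have p1: "0 \<le> Re (qf X M u)" by (rule psd_on_qf[OF M])
    have p2: "0 \<le> Re (B s s - \<beta>)" using psd_on_qf[OF B, of w] unfolding qB by simp
    have tt: "cnj t * t = complex_of_real ((cmod t)^2)"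
      using complex_norm_square[of t] by (simp only: mult.commute)
    have "Re (cnj t * t * (B s s - \<beta>)) = (cmod t)^2 * Re (B s s - \<beta>)" unfolding tt by simp
    also have "\<dots> \<ge> 0" using p2 by simp
    finally show "0 \<le> Re (qf (insert s X) A v)" unfolding key using p1 by simp
  qed
  show ?thesis using psdA agX agK by blast
qed

lemma successively_take: "successively P xs \<Longrightarrow> successively P (take n xs)"
  using successively_append_iff[of P "take n xs" "drop n xs"] by simp

lemma successively_drop: "successively P xs \<Longrightarrow> successively P (drop n xs)"
  using successively_append_iff[of P "take n xs" "drop n xs"] by simp

lemma last_take_nth_conv: "n < length xs \<Longrightarrow> last (take (Suc n) xs) = xs ! n"
  by (subst last_conv_nth) auto

definition chordalS :: "'a set \<Rightarrow> ('a \<Rightarrow> 'a \<Rightarrow> bool) \<Rightarrow> bool" where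
  "chordalS V E \<longleftrightarrow> (\<forall>vs. distinct vs \<and> length vs \<ge> 4 \<and> set vs \<subseteq> V \<and>
       (\<forall>k<length vs. E (vs ! k) (vs ! ((k + 1) mod length vs))) \<longrightarrow>
       (\<exists>k l. k < length vs \<and> l < length vs \<and> k \<noteq> l \<and>
          l \<noteq> (k + 1) mod length vs \<and> k \<noteq> (l + 1) mod length vs \<and> E (vs ! k) (vs ! l)))"

definition clq :: "('a \<Rightarrow> 'a \<Rightarrow> bool) \<Rightarrow> 'a set \<Rightarrow> bool" where
  "clq E K \<longleftrightarrow> (\<forall>i\<in>K. \<forall>j\<in>K. i \<noteq> j \<longrightarrow> E i j)"

lemma chordalS_mono: "chordalS V E \<Longrightarrow> U \<subseteq> V \<Longrightarrow> chordalS U E"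
  unfolding chordalS_def by blast

definition pathP :: "('a \<Rightarrow> 'a \<Rightarrow> bool) \<Rightarrow> 'a set \<Rightarrow> 'a \<Rightarrow> 'a \<Rightarrow> 'a list \<Rightarrow> bool" where
  "pathP E C x y p \<longleftrightarrow> p \<noteq> [] \<and> set p \<subseteq> C \<and> successively (\<lambda>a b. a = b \<or> E a b) p \<and>
     E x (hd p) \<and> E y (last p)"

lemma min_path_props:
  assumes P: "pathP E C x y p" and minp: "\<forall>q. pathP E C x y q \<longrightarrow> length p \<le> length q"
  shows "distinct p"
    and "\<And>i. 0 < i \<Longrightarrow> i < length p \<Longrightarrow> \<not> E x (p ! i)"
    and "\<And>i. Suc i < length p \<Longrightarrow> \<not> E y (p ! i)"
    and "\<And>i j. Suc i < j \<Longrightarrow> j < length p \<Longrightarrow> \<not> E (p ! i) (p ! j)"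
    and "\<And>i. Suc i < length p \<Longrightarrow> E (p ! i) (p ! Suc i)"
proof -
  have ne: "p \<noteq> []" and sC: "set p \<subseteq> C" and sp: "successively (\<lambda>a b. a = b \<or> E a b) p"
    and hx: "E x (hd p)" and ly: "E y (last p)" using P unfolding pathP_def by auto
  show dist: "distinct p"
  proof (rule ccontr)
    assume "\<not> distinct p"
    then obtain i j where ij: "i < j" "j < length p" "p ! i = p ! j"
      by (metis distinct_conv_nth linorder_neqE_nat)
    define q where "q = take (Suc i) p @ drop (Suc j) p"
    have lq: "length q < length p" unfolding q_def using ij by simp
    have "pathP E C x y q"
      unfolding pathP_def
    proof (intro conjI)
      show "q \<noteq> []" unfolding q_def using ne by simp
      show "set q \<subseteq> C" unfolding q_def using sC set_take_subset set_drop_subset by fastforce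
      have hq: "hd q = hd p" unfolding q_def using ij ne by (cases p) auto
      show "E x (hd q)" using hx hq by simp
      show "E y (last q)"
      proof (cases "Suc j = length p")
        case True
        then have "last q = p ! i" unfolding q_def using ij by (simp add: last_take_nth_conv)
        also have "\<dots> = last p" using ij True ne last_conv_nth[OF ne] by (metis diff_Suc_1)
        finally show ?thesis using ly by simp
      next
        case False
        then have "drop (Suc j) p \<noteq> []" using ij by simp
        then have "last q = last p" unfolding q_def by simp
        then show ?thesis using ly by simp
      qed
      show "successively (\<lambda>a b. a = b \<or> E a b) q"
        unfolding q_def successively_append_iff
      proof (intro conjI)
        show "successively (\<lambda>a b. a = b \<or> E a b) (take (Suc i) p)" using successively_take[OF sp] .
        show "successively (\<lambda>a b. a = b \<or> E a b) (drop (Suc j) p)" using successively_drop[OF sp] .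
        show "take (Suc i) p = [] \<or> drop (Suc j) p = [] \<or> (last (take (Suc i) p) = hd (drop (Suc j) p) \<or> E (last (take (Suc i) p)) (hd (drop (Suc j) p)))"
        proof (cases "Suc j < length p")
          case True
          have "last (take (Suc i) p) = p ! j" using ij by (simp add: last_take_nth_conv)
          moreover have "hd (drop (Suc j) p) = p ! Suc j" using True by (simp add: hd_drop_conv_nth)
          ultimately show ?thesis using successively_nth[OF sp True] by simp
        qed (use ij in simp)
      qed
    qed
    then show False using minp lq by (meson not_le)
  qed
  show m1: "\<And>i. 0 < i \<Longrightarrow> i < length p \<Longrightarrow> \<not> E x (p ! i)"
  proof
    fix i assume i: "0 < i" "i < length p" and e: "E x (p ! i)"
    define q where "q = drop i p"
    have "pathP E C x y q" unfolding pathP_def q_def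
      using i e sC set_drop_subset[of i p] successively_drop[OF sp] ly
      by (auto simp: hd_drop_conv_nth)
    then have "length p \<le> length q" using minp by blast
    then show False using i unfolding q_def by simp
  qed
  show m2: "\<And>i. Suc i < length p \<Longrightarrow> \<not> E y (p ! i)"
  proof
    fix i assume i: "Suc i < length p" and e: "E y (p ! i)"
    define q where "q = take (Suc i) p"
    have "pathP E C x y q" unfolding pathP_def q_def
      using i e sC set_take_subset[of "Suc i" p] successively_take[OF sp] hx ne
      by (auto simp: last_take_nth_conv)
    then have "length p \<le> length q" using minp by blast
    then show False using i unfolding q_def by simp
  qed
  show m3: "\<And>i j. Suc i < j \<Longrightarrow> j < length p \<Longrightarrow> \<not> E (p ! i) (p ! j)"
  proof
    fix i j assume ij: "Suc i < j" "j < length p" and e: "E (p ! i) (p ! j)"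
    define q where "q = take (Suc i) p @ drop j p"
    have lq: "length q < length p" unfolding q_def using ij by simp
    have "pathP E C x y q"
      unfolding pathP_def
    proof (intro conjI)
      show "q \<noteq> []" unfolding q_def using ne by simp
      show "set q \<subseteq> C" unfolding q_def using sC set_take_subset set_drop_subset by fastforce
      have hq: "hd q = hd p" unfolding q_def using ij ne by (cases p) auto
      show "E x (hd q)" using hx hq by simp
      have "drop j p \<noteq> []" using ij by simp
      then have "last q = last p" unfolding q_def by simp
      then show "E y (last q)" using ly by simp
      show "successively (\<lambda>a b. a = b \<or> E a b) q"
        unfolding q_def successively_append_iff
        using successively_take[OF sp] successively_drop[OF sp] ij e
        by (simp add: last_take_nth_conv hd_drop_conv_nth)
    qed
    then show False using minp lq by (meson not_le)
  qed
  show "\<And>i. Suc i < length p \<Longrightarrow> E (p ! i) (p ! Suc i)"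
  proof -
    fix i assume i: "Suc i < length p"
    have "p ! i \<noteq> p ! Suc i" using dist i by (simp add: nth_eq_iff_index_eq)
    then show "E (p ! i) (p ! Suc i)" using successively_nth[OF sp i] by simp
  qed
qed

lemma sep_clique:
  assumes sym: "\<forall>a b. E a b \<longrightarrow> E b a" and ch: "chordalS V E"
    and CV: "C \<subseteq> V" and v: "v \<in> V" "v \<notin> C"
    and xy: "x \<in> V" "y \<in> V" "x \<noteq> y" "x \<notin> C" "y \<notin> C" "v \<noteq> x" "v \<noteq> y"
    and Evx: "E v x" and Evy: "E v y" and nvC: "\<forall>c\<in>C. \<not> E v c"
    and ex: "pathP E C x y p0"
  shows "E x y"
proof (rule ccontr)
  assume nxy: "\<not> E x y"
  then have nyx: "\<not> E y x" using sym by blast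
  obtain p where P: "pathP E C x y p" and minp: "\<forall>q. pathP E C x y q \<longrightarrow> length p \<le> length q"
    using ex_has_least_nat[of "pathP E C x y" p0 length] ex by blast
  note mp = min_path_props[OF P minp]
  have ne: "p \<noteq> []" and sC: "set p \<subseteq> C" and hx: "E x (hd p)" and ly: "E y (last p)"
    using P unfolding pathP_def by auto
  define L where "L = length p"
  have L0: "0 < L" using ne L_def by simp
  define vs where "vs = v # x # p @ [y]"
  define N where "N = L + 3"
  have lvs: "length vs = N" unfolding vs_def N_def L_def by simp
  have n0: "vs ! 0 = v" and n1: "vs ! 1 = x" unfolding vs_def by simp_all
  have np: "\<And>i. i < L \<Longrightarrow> vs ! Suc (Suc i) = p ! i" unfolding vs_def L_def by (simp add: nth_append)
  have ny: "vs ! Suc (Suc L) = y" unfolding vs_def L_def by simp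
  have pC: "\<And>i. i < L \<Longrightarrow> p ! i \<in> C" using sC L_def by auto
  have idx: "\<And>j. j < N \<Longrightarrow> j = 0 \<or> j = 1 \<or> (\<exists>i<L. j = Suc (Suc i)) \<or> j = Suc (Suc L)"
  proof -
    fix j assume j: "j < N"
    show "j = 0 \<or> j = 1 \<or> (\<exists>i<L. j = Suc (Suc i)) \<or> j = Suc (Suc L)"
    proof (cases "j < 2")
      case True then show ?thesis by auto
    next
      case False
      then have jj: "j = Suc (Suc (j - 2))" by simp
      show ?thesis
      proof (cases "j - 2 < L")
        case True then show ?thesis using jj by blast
      next
        case False then have "j - 2 = L" using j unfolding N_def by simp
        then show ?thesis using jj by simp
      qed
    qed
  qed
  have helper: "\<And>k l. k < l \<Longrightarrow> l < N \<Longrightarrow> l \<noteq> Suc k \<Longrightarrow> \<not> (k = 0 \<and> l = Suc (Suc L)) \<Longrightarrow> \<not> E (vs ! k) (vs ! l)"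
  proof -
    fix k l assume kl: "k < l" "l < N" "l \<noteq> Suc k" "\<not> (k = 0 \<and> l = Suc (Suc L))"
    have kN: "k < N" using kl by simp
    show "\<not> E (vs ! k) (vs ! l)"
    proof (cases "k = 0")
      case True
      then have "l \<noteq> 1" "l \<noteq> 0" "l \<noteq> Suc (Suc L)" using kl by auto
      then obtain i where i: "i < L" "l = Suc (Suc i)" using idx[OF kl(2)] by blast
      then show ?thesis using True n0 np pC nvC by auto
    next
      case k0: False
      show ?thesis
      proof (cases "k = 1")
        case True
        then have l3: "l \<noteq> 1" "l \<noteq> 0" "l \<noteq> 2" using kl by auto
        consider (a) i where "i < L" "l = Suc (Suc i)" | (b) "l = Suc (Suc L)"
          using idx[OF kl(2)] l3 by auto
        then show ?thesis
        proof cases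
          case a
          then have "0 < i" using l3 by (cases i) auto
          then show ?thesis using a True n1 np mp(2)[of i] L_def by auto
        next
          case b then show ?thesis using True n1 ny nxy by simp
        qed
      next
        case k1: False
        then obtain i where i: "i < L" "k = Suc (Suc i)"
          using idx[OF kN] k0 kl kN unfolding N_def by force
        consider (a) j where "j < L" "l = Suc (Suc j)" | (b) "l = Suc (Suc L)"
          using idx[OF kl(2)] kl i by force
        then show ?thesis
        proof cases
          case a
          then have "Suc i < j" using kl i by auto
          then show ?thesis using a i np mp(4)[of i j] L_def by auto
        next
          case b
          then have "Suc i < L" using kl i by auto
          then have "\<not> E y (p ! i)" using mp(3)[of i] L_def by simp
          then have "\<not> E (p ! i) y" using sym by blast
          then show ?thesis using b i np ny by simp
        qed
      qed
    qed
  qed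
  have dist: "distinct vs"
    unfolding vs_def using mp(1) xy v sC by auto
  have len4: "length vs \<ge> 4" using lvs L0 N_def by simp
  have setV: "set vs \<subseteq> V" unfolding vs_def using sC CV v xy by auto
  have cyc: "\<forall>k<length vs. E (vs ! k) (vs ! ((k + 1) mod length vs))"
  proof (intro allI impI)
    fix k assume k: "k < length vs"
    then have kN: "k < N" using lvs by simp
    show "E (vs ! k) (vs ! ((k + 1) mod length vs))"
    proof (cases "k = Suc (Suc L)")
      case True
      then have "k + 1 = length vs" using lvs N_def by simp
      then have "(k + 1) mod length vs = 0" by simp
      then show ?thesis using True ny n0 Evy sym by simp
    next
      case False
      then have m: "(k + 1) mod length vs = Suc k" using kN lvs N_def by simp
      consider (a) "k = 0" | (b) "k = 1" | (c) i where "i < L" "k = Suc (Suc i)"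
        using idx[OF kN] False by blast
      then show ?thesis
      proof cases
        case a then show ?thesis using m n0 n1 Evx by simp
      next
        case b
        have "vs ! 2 = p ! 0" using np[OF L0] by (simp add: numeral_2_eq_2)
        moreover have "hd p = p ! 0" using ne by (simp add: hd_conv_nth)
        ultimately show ?thesis using m b n1 hx by (simp add: numeral_2_eq_2)
      next
        case c
        show ?thesis
        proof (cases "Suc i < L")
          case True
          then show ?thesis using m c np mp(5)[of i] L_def by simp
        next
          case False
          then have iL: "i = L - 1" using c by simp
          have "last p = p ! i" using ne iL L_def by (simp add: last_conv_nth)
          then have "E (p ! i) y" using ly sym by simp
          moreover have "Suc k = Suc (Suc L)" using iL c L0 by simp
          moreover have "vs ! k = p ! i" using np[of i] c by simp
          ultimately show ?thesis using m ny by simp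
        qed
      qed
    qed
  qed
  obtain k l where kl: "k < length vs" "l < length vs" "k \<noteq> l" "l \<noteq> (k + 1) mod length vs"
      "k \<noteq> (l + 1) mod length vs" "E (vs ! k) (vs ! l)"
    using ch[unfolded chordalS_def, rule_format, of vs] dist len4 setV cyc by blast
  have gen: "\<And>a b. a < b \<Longrightarrow> b < N \<Longrightarrow> b \<noteq> (a + 1) mod N \<Longrightarrow> a \<noteq> (b + 1) mod N \<Longrightarrow> \<not> E (vs ! a) (vs ! b)"
  proof -
    fix a b assume ab: "a < b" "b < N" "b \<noteq> (a + 1) mod N" "a \<noteq> (b + 1) mod N"
    have "(a + 1) mod N = Suc a" using ab by simp
    then have "b \<noteq> Suc a" using ab by simp
    moreover have "\<not> (a = 0 \<and> b = Suc (Suc L))"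
    proof
      assume "a = 0 \<and> b = Suc (Suc L)"
      then have "b + 1 = N" unfolding N_def by simp
      then have "(b + 1) mod N = 0" by simp
      then show False using ab \<open>a = 0 \<and> b = Suc (Suc L)\<close> by simp
    qed
    ultimately show "\<not> E (vs ! a) (vs ! b)" using helper ab by blast
  qed
  show False
  proof (cases "k < l")
    case True then show ?thesis using gen[of k l] kl lvs by simp
  next
    case False
    then have "l < k" using kl by simp
    moreover have "E (vs ! l) (vs ! k)" using kl(6) sym by blast
    ultimately show ?thesis using gen[of l k] kl lvs by simp
  qed
qed

lemma path_elems:
  assumes "q \<noteq> []" "hd q = c0" "set q \<subseteq> W" "successively R q" "a \<in> set q"
  shows "\<exists>q'. q' \<noteq> [] \<and> hd q' = c0 \<and> last q' = a \<and> set q' \<subseteq> W \<and> successively R q'"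
proof -
  obtain i where i: "i < length q" "q ! i = a" using assms(5) by (auto simp: in_set_conv_nth)
  show ?thesis
  proof (intro exI conjI)
    show "take (Suc i) q \<noteq> []" using assms(1) by simp
    show "hd (take (Suc i) q) = c0" using assms(1,2) by (cases q) auto
    show "last (take (Suc i) q) = a" using i last_take_nth_conv by metis
    show "set (take (Suc i) q) \<subseteq> W" using assms(3) set_take_subset by fastforce
    show "successively R (take (Suc i) q)" using successively_take[OF assms(4)] .
  qed
qed

lemma simplicial_exists:
  assumes "finite V" "\<forall>a b. E a b \<longrightarrow> E b a" "chordalS V E" "K \<subseteq> V" "clq E K" "K \<noteq> V"
  shows "\<exists>s\<in>V - K. clq E {u\<in>V. E s u}"
  using assms
proof (induction "card V" arbitrary: V K rule: less_induct)
  case less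
  have fin: "finite V" and sym: "\<forall>a b. E a b \<longrightarrow> E b a" and ch: "chordalS V E" and KV: "K \<subseteq> V"
    and Kc: "clq E K" and KneV: "K \<noteq> V" using less.prems by auto
  define NN where "NN v = insert v {u\<in>V. E v u}" for v
  show ?case
  proof (cases "\<exists>v\<in>V. K \<subseteq> NN v \<and> NN v \<noteq> V")
    case True
    then obtain v where v: "v \<in> V" "K \<subseteq> NN v" "NN v \<noteq> V" by blast
    define W where "W = V - NN v"
    have NNsub: "NN v \<subseteq> V" unfolding NN_def using v by auto
    then have "W \<noteq> {}" using v unfolding W_def by blast
    then obtain c0 where c0: "c0 \<in> W" by blast
    define R where "R = (\<lambda>a b. a = b \<or> E a b)"
    define C where "C = {c. \<exists>q. q \<noteq> [] \<and> hd q = c0 \<and> last q = c \<and> set q \<subseteq> W \<and> successively R q}"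
    have CW: "C \<subseteq> W"
    proof
      fix c assume "c \<in> C"
      then obtain q where "q \<noteq> []" "last q = c" "set q \<subseteq> W" unfolding C_def by blast
      then show "c \<in> W" using last_in_set by blast
    qed
    have c0C: "c0 \<in> C" unfolding C_def using c0 by (intro CollectI exI[of _ "[c0]"]) auto
    have clos: "\<And>c d. c \<in> C \<Longrightarrow> d \<in> W \<Longrightarrow> E c d \<Longrightarrow> d \<in> C"
    proof -
      fix c d assume c: "c \<in> C" and d: "d \<in> W" and e: "E c d"
      then obtain q where q: "q \<noteq> []" "hd q = c0" "last q = c" "set q \<subseteq> W" "successively R q"
        unfolding C_def by blast
      show "d \<in> C" unfolding C_def
      proof (intro CollectI exI[of _ "q @ [d]"] conjI)
        show "q @ [d] \<noteq> []" by simp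
        show "hd (q @ [d]) = c0" using q by simp
        show "last (q @ [d]) = d" by simp
        show "set (q @ [d]) \<subseteq> W" using q d by simp
        show "successively R (q @ [d])" unfolding successively_append_iff using q e R_def by simp
      qed
    qed
    have inC: "\<And>q a. q \<noteq> [] \<Longrightarrow> hd q = c0 \<Longrightarrow> set q \<subseteq> W \<Longrightarrow> successively R q \<Longrightarrow> a \<in> set q \<Longrightarrow> a \<in> C"
    proof -
      fix q a assume "q \<noteq> []" "hd q = c0" "set q \<subseteq> W" "successively R q" "a \<in> set q"
      from path_elems[OF this] show "a \<in> C" unfolding C_def by blast
    qed
    define S where "S = {x\<in>V - C. \<exists>c\<in>C. E x c}"
    have nvC: "\<forall>c\<in>C. \<not> E v c"
    proof
      fix c assume "c \<in> C" then have "c \<in> W" using CW by blast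
      then show "\<not> E v c" unfolding W_def NN_def by auto
    qed
    have vC: "v \<notin> C" using CW unfolding W_def NN_def by auto
    have Sprop: "\<And>x. x \<in> S \<Longrightarrow> E v x \<and> x \<noteq> v \<and> x \<in> V \<and> x \<notin> C"
    proof -
      fix x assume x: "x \<in> S"
      then obtain c where c: "c \<in> C" "E x c" and xV: "x \<in> V" and xC: "x \<notin> C" unfolding S_def by blast
      have "x \<notin> W"
      proof
        assume "x \<in> W"
        moreover have "E c x" using c sym by blast
        ultimately have "x \<in> C" using clos c by blast
        then show False using xC by blast
      qed
      then have xN: "x \<in> NN v" using xV unfolding W_def by blast
      have xv: "x \<noteq> v" using c nvC by blast
      then have "E v x" using xN unfolding NN_def by blast
      then show "E v x \<and> x \<noteq> v \<and> x \<in> V \<and> x \<notin> C" using xv xV xC by blast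
    qed
    have CV: "C \<subseteq> V" using CW unfolding W_def by blast
    have Sclq: "clq E S"
      unfolding clq_def
    proof (intro ballI impI)
      fix x y assume x: "x \<in> S" and y: "y \<in> S" and xy: "x \<noteq> y"
      obtain cx where cx: "cx \<in> C" "E x cx" using x unfolding S_def by blast
      obtain cy where cy: "cy \<in> C" "E y cy" using y unfolding S_def by blast
      obtain qx where qx: "qx \<noteq> []" "hd qx = c0" "last qx = cx" "set qx \<subseteq> W" "successively R qx"
        using cx unfolding C_def by blast
      obtain qy where qy: "qy \<noteq> []" "hd qy = c0" "last qy = cy" "set qy \<subseteq> W" "successively R qy"
        using cy unfolding C_def by blast
      define p0 where "p0 = rev qx @ qy"
      have Rsym: "\<And>a b. R a b \<Longrightarrow> R b a" unfolding R_def using sym by blast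
      have "pathP E C x y p0" unfolding pathP_def
      proof (intro conjI)
        show "p0 \<noteq> []" unfolding p0_def using qy by simp
        show "set p0 \<subseteq> C" unfolding p0_def using inC[OF qx(1,2,4,5)] inC[OF qy(1,2,4,5)] by auto
        have "successively (\<lambda>a b. R b a) qx" using qx(5) Rsym by (rule successively_mono)
        then have "successively R (rev qx)" by simp
        moreover have "last (rev qx) = c0" using qx by (simp add: last_rev)
        moreover have "hd qy = c0" using qy by simp
        ultimately show "successively (\<lambda>a b. a = b \<or> E a b) p0"
          unfolding p0_def successively_append_iff R_def[symmetric] using qy(5) by (simp add: R_def)
        show "E x (hd p0)" unfolding p0_def using qx cx by (simp add: hd_rev)
        show "E y (last p0)" unfolding p0_def using qy cy by simp
      qed
      then show "E x y"
        using sep_clique[OF sym ch CV v(1) vC] Sprop[OF x] Sprop[OF y] xy nvC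
          Sprop[OF x] by auto
    qed
    define V' where "V' = C \<union> S"
    have V'V: "V' \<subseteq> V" unfolding V'_def using CV S_def by blast
    have vV': "v \<notin> V'" unfolding V'_def using vC Sprop by blast
    have "V' \<subset> V" using V'V vV' v(1) by blast
    then have cardlt: "card V' < card V" using psubset_card_mono[OF fin] by blast
    have SV': "S \<subseteq> V'" unfolding V'_def by blast
    have SneV': "S \<noteq> V'" using c0C unfolding V'_def S_def by blast
    obtain s where s: "s \<in> V' - S" and sc: "clq E {u\<in>V'. E s u}"
      using less.hyps[OF cardlt _ sym chordalS_mono[OF ch V'V] SV' Sclq SneV'] fin V'V finite_subset
      by blast
    have sC: "s \<in> C" using s unfolding V'_def by blast
    have eqN: "{u\<in>V. E s u} = {u\<in>V'. E s u}"
    proof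
      show "{u\<in>V. E s u} \<subseteq> {u\<in>V'. E s u}"
      proof
        fix u assume u: "u \<in> {u\<in>V. E s u}"
        show "u \<in> {u\<in>V'. E s u}"
        proof (cases "u \<in> W")
          case True
          then have "u \<in> C" using clos sC u by blast
          then show ?thesis using u unfolding V'_def by blast
        next
          case False
          then have "u \<notin> C" using CW by blast
          moreover have "E u s" using u sym by blast
          ultimately have "u \<in> S" unfolding S_def using u sC by blast
          then show ?thesis using u unfolding V'_def by blast
        qed
      qed
    qed (use V'V in blast)
    have sK: "s \<notin> K" using sC CW v(2) unfolding W_def by blast
    have "s \<in> V - K" using sK sC CV by blast
    moreover have "clq E {u\<in>V. E s u}" unfolding eqN by (rule sc)
    ultimately show ?thesis by blast
  next
    case False
    then have all: "\<And>v. v \<in> V \<Longrightarrow> K \<subseteq> NN v \<Longrightarrow> NN v = V" by blast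
    show ?thesis
    proof (cases "K = {}")
      case True
      then have "V \<noteq> {}" using KneV by simp
      then obtain s where s: "s \<in> V" by auto
      have "clq E {u\<in>V. E s u}" unfolding clq_def
      proof (intro ballI impI)
        fix i j assume i: "i \<in> {u\<in>V. E s u}" and j: "j \<in> {u\<in>V. E s u}" and ij: "i \<noteq> j"
        have "i \<in> V" using i by simp
        then have "NN i = V" using all[of i] True by simp
        then have "j \<in> NN i" using j by blast
        then show "E i j" using ij unfolding NN_def by simp
      qed
      moreover have "s \<in> V - K" using s True by simp
      ultimately show ?thesis by (rule bexI)
    next
      case False
      then obtain k where k: "k \<in> K" using ex_in_conv by metis
      have kV: "k \<in> V" using k KV by blast
      have "K \<subseteq> NN k"
      proof
        fix j assume j: "j \<in> K"
        show "j \<in> NN k"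
        proof (cases "j = k")
          case True then show ?thesis unfolding NN_def by simp
        next
          case False
          then have "k \<noteq> j" by simp
          then have "E k j" using Kc k j unfolding clq_def by blast
          moreover have "j \<in> V" using j KV by blast
          ultimately show ?thesis unfolding NN_def by simp
        qed
      qed
      then have Nk: "NN k = V" using all[OF kV] by simp
      define V' where "V' = V - {k}"
      define K' where "K' = K - {k}"
      have cardlt: "card V' < card V" unfolding V'_def using card_Diff1_less[OF fin kV] .
      have K'V': "K' \<subseteq> V'" unfolding K'_def V'_def using KV by blast
      have K'c: "clq E K'" using Kc unfolding clq_def K'_def by blast
      have K'ne: "K' \<noteq> V'" using KneV k KV unfolding K'_def V'_def by blast
      obtain s where s: "s \<in> V' - K'" and sc: "clq E {u\<in>V'. E s u}"
      proof -
        have fV': "finite V'" unfolding V'_def using fin by simp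
        have chV': "chordalS V' E" using chordalS_mono[OF ch, of V'] unfolding V'_def by blast
        show ?thesis using less.hyps[OF cardlt fV' sym chV' K'V' K'c K'ne] that by blast
      qed
      have "clq E {u\<in>V. E s u}" unfolding clq_def
      proof (intro ballI impI)
        fix i j assume i: "i \<in> {u\<in>V. E s u}" and j: "j \<in> {u\<in>V. E s u}" and ij: "i \<noteq> j"
        show "E i j"
        proof (cases "i = k")
          case True
          then have "j \<in> NN k" using j Nk by blast
          then show ?thesis using True ij unfolding NN_def by blast
        next
          case ik: False
          show ?thesis
          proof (cases "j = k")
            case True
            then have "i \<in> NN k" using i Nk by blast
            then have "E k i" using True ij unfolding NN_def by blast
            then show ?thesis using True sym by blast
          next
            case False
            then show ?thesis using sc i j ij ik unfolding clq_def V'_def by blast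
          qed
        qed
      qed
      then show ?thesis using s unfolding V'_def K'_def by blast
    qed
  qed
qed

lemma psd_completion:
  assumes "finite V" "\<forall>a b. E a b \<longrightarrow> E b a" "chordalS V E" "\<forall>K. K \<subseteq> V \<and> clq E K \<longrightarrow> psd_on K A"
  shows "\<exists>A'. psd_on V A' \<and> (\<forall>a\<in>V. \<forall>b\<in>V. (a = b \<or> E a b) \<longrightarrow> A' a b = A a b)"
  using assms
proof (induction "card V" arbitrary: V rule: less_induct)
  case less
  have fin: "finite V" and sym: "\<forall>a b. E a b \<longrightarrow> E b a" and ch: "chordalS V E"
    and hyp: "\<forall>K. K \<subseteq> V \<and> clq E K \<longrightarrow> psd_on K A" using less.prems by auto
  show ?case
  proof (cases "V = {}")
    case True
    have "psd_on {} A" using hyp unfolding clq_def by blast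
    then show ?thesis using True by blast
  next
    case False
    have c0: "clq E {}" unfolding clq_def by simp
    obtain s where s: "s \<in> V - {}" and sc: "clq E {u\<in>V. E s u}"
      using simplicial_exists[OF fin sym ch _ c0] False by blast
    have sV: "s \<in> V" using s by simp
    define V' where "V' = V - {s}"
    have cardlt: "card V' < card V" unfolding V'_def using card_Diff1_less[OF fin sV] .
    have fV': "finite V'" unfolding V'_def using fin by simp
    have chV': "chordalS V' E" using chordalS_mono[OF ch, of V'] unfolding V'_def by blast
    have hyp': "\<forall>K. K \<subseteq> V' \<and> clq E K \<longrightarrow> psd_on K A" using hyp unfolding V'_def by blast
    obtain A0 where A0: "psd_on V' A0" and ag0: "\<forall>a\<in>V'. \<forall>b\<in>V'. (a = b \<or> E a b) \<longrightarrow> A0 a b = A a b"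
      using less.hyps[OF cardlt fV' sym chV' hyp'] by blast
    define N where "N = {u\<in>V'. E s u}"
    have sV': "s \<notin> V'" unfolding V'_def by simp
    have NV': "N \<subseteq> V'" unfolding N_def by blast
    have clqN: "clq E (insert s N)" unfolding clq_def
    proof (intro ballI impI)
      fix i j assume i: "i \<in> insert s N" and j: "j \<in> insert s N" and ij: "i \<noteq> j"
      show "E i j"
      proof (cases "i = s")
        case True then show ?thesis using j ij unfolding N_def by simp
      next
        case ni: False
        show ?thesis
        proof (cases "j = s")
          case True
          then have "E s i" using i ni unfolding N_def by simp
          then show ?thesis using True sym by blast
        next
          case False
          then have "i \<in> {u\<in>V. E s u}" "j \<in> {u\<in>V. E s u}" using i j ni unfolding N_def V'_def by auto
          then show ?thesis using sc ij unfolding clq_def by blast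
        qed
      qed
    qed
    have psdB: "psd_on (insert s N) A"
    proof -
      have "insert s N \<subseteq> V" using sV NV' unfolding V'_def by blast
      then show ?thesis using hyp clqN by blast
    qed
    have agree: "\<forall>a\<in>N. \<forall>b\<in>N. A0 a b = A a b"
    proof (intro ballI)
      fix a b assume a: "a \<in> N" and b: "b \<in> N"
      have "a = b \<or> E a b" using clqN a b unfolding clq_def by blast
      then show "A0 a b = A a b" using ag0 a b NV' by blast
    qed
    obtain A' where A': "psd_on (insert s V') A'" and agX: "\<forall>a\<in>V'. \<forall>b\<in>V'. A' a b = A0 a b"
        and agK: "\<forall>a\<in>insert s N. \<forall>b\<in>insert s N. A' a b = A a b"
      using psd_extend[OF fV' sV' NV' A0 psdB agree] by blast
    have VV: "insert s V' = V" unfolding V'_def using sV by blast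
    have "\<forall>a\<in>V. \<forall>b\<in>V. (a = b \<or> E a b) \<longrightarrow> A' a b = A a b"
    proof (intro ballI impI)
      fix a b assume a: "a \<in> V" and b: "b \<in> V" and ab: "a = b \<or> E a b"
      show "A' a b = A a b"
      proof (cases "a = s")
        case True
        then have "b \<in> insert s N" using ab b unfolding N_def V'_def by auto
        then show ?thesis using agK True by blast
      next
        case as: False
        show ?thesis
        proof (cases "b = s")
          case True
          then have "E s a" using ab as sym by blast
          then have "a \<in> insert s N" using a as unfolding N_def V'_def by auto
          then show ?thesis using agK True by blast
        next
          case False
          then have "a \<in> V'" "b \<in> V'" using a b as unfolding V'_def by auto
          then have "A' a b = A0 a b" "A0 a b = A a b" using agX ag0 ab by blast+
          then show ?thesis by simp
        qed
      qed
    qed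
    then show ?thesis using A' VV by auto
  qed
qed

definition ei :: "nat \<Rightarrow> mindex" where "ei i = (\<lambda>j. if j = i then 1 else 0)"

lemma ei_inj[simp]: "ei i = ei k \<longleftrightarrow> i = k"
proof
  assume "ei i = ei k"
  then have "ei i i = ei k i" by simp
  then show "i = k" unfolding ei_def by (simp split: if_splits)
qed simp

lemma ei_ne_zero[simp]: "ei i \<noteq> zero_mi" "zero_mi \<noteq> ei i"
proof -
  have "ei i i \<noteq> zero_mi i" unfolding ei_def zero_mi_def by simp
  then show "ei i \<noteq> zero_mi" "zero_mi \<noteq> ei i" by auto
qed

lemma msupp_ei[simp]: "msupp (ei i) = {i}" unfolding msupp_def ei_def by auto

lemma mono1_char:
  "\<alpha> \<in> mono_idx n 1 I \<longleftrightarrow> \<alpha> = zero_mi \<or> (\<exists>i\<in>I. i < n \<and> \<alpha> = ei i)"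
proof
  assume a: "\<alpha> \<in> mono_idx n 1 I"
  then have mi: "mi_on n \<alpha>" and md: "mdeg n \<alpha> \<le> 1" and ms: "msupp \<alpha> \<subseteq> I"
    unfolding mono_idx_def by auto
  show "\<alpha> = zero_mi \<or> (\<exists>i\<in>I. i < n \<and> \<alpha> = ei i)"
  proof (cases "\<alpha> = zero_mi")
    case False
    then obtain j where j: "\<alpha> j \<noteq> 0" unfolding zero_mi_def by auto
    have jn: "j < n" using mi j unfolding mi_on_def by (meson not_le)
    have s: "mdeg n \<alpha> = \<alpha> j + (\<Sum>i\<in>{..<n} - {j}. \<alpha> i)"
      unfolding mdeg_def using jn by (simp add: sum.remove)
    then have aj: "\<alpha> j = 1" and r: "(\<Sum>i\<in>{..<n} - {j}. \<alpha> i) = 0" using md j by linarith+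
    have "\<alpha> = ei j"
    proof
      fix i show "\<alpha> i = ei j i"
      proof (cases "i = j")
        case True then show ?thesis using aj unfolding ei_def by simp
      next
        case False
        show ?thesis
        proof (cases "i < n")
          case True
          then have "\<alpha> i = 0" using r False by simp
          then show ?thesis using False unfolding ei_def by simp
        next
          case False2: False
          then show ?thesis using mi False unfolding mi_on_def ei_def by simp
        qed
      qed
    qed
    moreover have "j \<in> I" using ms j unfolding msupp_def by auto
    ultimately show ?thesis using jn by blast
  qed simp
next
  assume "\<alpha> = zero_mi \<or> (\<exists>i\<in>I. i < n \<and> \<alpha> = ei i)"
  then show "\<alpha> \<in> mono_idx n 1 I"
  proof
    assume "\<alpha> = zero_mi"
    then show ?thesis unfolding mono_idx_def mi_on_def mdeg_def msupp_def zero_mi_def by simp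
  next
    assume "\<exists>i\<in>I. i < n \<and> \<alpha> = ei i"
    then obtain i where i: "i \<in> I" "i < n" "\<alpha> = ei i" by blast
    have "mdeg n (ei i) = 1" unfolding mdeg_def ei_def using i(2) by (simp add: sum.delta)
    moreover have "mi_on n (ei i)" unfolding mi_on_def ei_def using i(2) by auto
    ultimately show ?thesis unfolding mono_idx_def using i by simp
  qed
qed

lemma mono0: "mono_idx n 0 I = {zero_mi}"
proof
  show "mono_idx n 0 I \<subseteq> {zero_mi}"
  proof
    fix \<alpha> assume "\<alpha> \<in> mono_idx n 0 I"
    then have mi: "mi_on n \<alpha>" and md: "mdeg n \<alpha> = 0" unfolding mono_idx_def by auto
    have "\<alpha> = zero_mi"
    proof
      fix i show "\<alpha> i = zero_mi i"
      proof (cases "i < n")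
        case True then show ?thesis using md unfolding mdeg_def zero_mi_def by simp
      next
        case False then show ?thesis using mi unfolding mi_on_def zero_mi_def by simp
      qed
    qed
    then show "\<alpha> \<in> {zero_mi}" by simp
  qed
  show "{zero_mi} \<subseteq> mono_idx n 0 I"
    unfolding mono_idx_def mi_on_def mdeg_def msupp_def zero_mi_def by simp
qed

lemma finite_mono1: "finite (mono_idx n 1 I)"
proof -
  have "mono_idx n 1 I \<subseteq> insert zero_mi (ei ` {..<n})" using mono1_char by blast
  then show ?thesis using finite_subset by blast
qed

lemma psupp_one: "psupp one_poly = {(zero_mi, zero_mi)}"
  unfolding psupp_def one_poly_def zero_mi_def by (auto split: if_splits)

lemma loc_entry_one: "loc_entry y one_poly b c = y (b, c)"
  unfolding loc_entry_def psupp_one by (simp add: one_poly_def zero_mi_def)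

lemma loc_entry_zero: "loc_entry y g zero_mi zero_mi = Lfun y g"
  unfolding loc_entry_def Lfun_def zero_mi_def by simp

lemma psd_on_cong:
  assumes "\<And>a b. a \<in> S \<Longrightarrow> b \<in> S \<Longrightarrow> M a b = M' a b"
  shows "psd_on S M = psd_on S M'"
proof -
  have "\<And>v. (\<Sum>a\<in>S. \<Sum>b\<in>S. cnj (v a) * M a b * v b) = (\<Sum>a\<in>S. \<Sum>b\<in>S. cnj (v a) * M' a b * v b)"
    using assms by (intro sum.cong refl) simp
  moreover have "(\<forall>a\<in>S. \<forall>b\<in>S. M a b = cnj (M b a)) = (\<forall>a\<in>S. \<forall>b\<in>S. M' a b = cnj (M' b a))"
    using assms by simp
  ultimately show ?thesis unfolding psd_on_def by simp
qed

lemma psd_single: "psd_on {z} M \<longleftrightarrow> Im (M z z) = 0 \<and> 0 \<le> Re (M z z)"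
proof
  assume p: "psd_on {z} M"
  have "Im (M z z) = 0" "0 \<le> Re (M z z)" using psd_diag[OF p] by auto
  then show "Im (M z z) = 0 \<and> 0 \<le> Re (M z z)" by simp
next
  assume h: "Im (M z z) = 0 \<and> 0 \<le> Re (M z z)"
  then have r: "M z z = complex_of_real (Re (M z z))" by (simp add: complex_eq_iff)
  show "psd_on {z} M"
  proof (rule psd_onI)
    fix a b assume "a \<in> {z}" "b \<in> {z}"
    then show "M a b = cnj (M b a)" using h by (simp add: complex_eq_iff)
  next
    fix v :: "'a \<Rightarrow> complex"
    have "qf {z} M v = cnj (v z) * v z * M z z" unfolding qf_def by (simp add: algebra_simps)
    also have "\<dots> = complex_of_real ((cmod (v z))^2 * Re (M z z))"
      using complex_norm_square[of "v z"] r by (simp add: mult.commute)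
    finally show "0 \<le> Re (qf {z} M v)" using h by simp
  qed
qed

lemma loc_psd0: "loc_psd n 0 I g y \<longleftrightarrow> Im (Lfun y g) = 0 \<and> 0 \<le> Re (Lfun y g)"
  unfolding loc_psd_def mono0 psd_single loc_entry_zero ..

lemma loc_psd1: "loc_psd n 1 I one_poly y \<longleftrightarrow> psd_on (mono_idx n 1 I) (\<lambda>b c. y (b, c))"
  unfolding loc_psd_def loc_entry_one ..

lemma mod_facts:
  fixes L p :: nat
  assumes L: "4 \<le> L" and p: "p < L"
  shows "(p + 2) mod L < L" "(p + 2) mod L \<noteq> p" "(p + 2) mod L \<noteq> (p + 1) mod L"
    "p \<noteq> ((p + 2) mod L + 1) mod L"
proof -
  show "(p + 2) mod L < L" using L by simp
  consider (a) "p + 3 < L" | (b) "p + 3 = L" | (c) "p + 2 = L" | (d) "p + 1 = L" using p by linarith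
  then have "(p + 2) mod L \<noteq> p \<and> (p + 2) mod L \<noteq> (p + 1) mod L \<and> p \<noteq> ((p + 2) mod L + 1) mod L"
  proof cases
    case a then show ?thesis by simp
  next
    case b
    then have "(p + 2) mod L = p + 2" "(p + 1) mod L = p + 1" by simp_all
    moreover have "p + 2 + 1 = L" using b by simp
    then have "(p + 2 + 1) mod L = 0" by simp
    ultimately show ?thesis using b L by simp
  next
    case c
    then have "(p + 2) mod L = 0" "(p + 1) mod L = p + 1" by simp_all
    moreover have "(0 + 1) mod L = 1" using L by simp
    ultimately show ?thesis using c L by simp
  next
    case d
    then have e1: "p + 2 = L + 1" by simp
    have "(L + 1) mod L = 1 mod L" by (rule mod_add_self1)
    then have "(L + 1) mod L = 1" using L by simp
    then have "(p + 2) mod L = 1" using e1 by simp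
    moreover have "(p + 1) mod L = 0" using d by simp
    moreover have "(1 + 1) mod L = 2" using L by simp
    ultimately show ?thesis using d L by simp
  qed
  then show "(p + 2) mod L \<noteq> p" "(p + 2) mod L \<noteq> (p + 1) mod L" "p \<noteq> ((p + 2) mod L + 1) mod L"
    by auto
qed

definition Eg :: "(nat \<Rightarrow> nat \<Rightarrow> bool) \<Rightarrow> mindex \<Rightarrow> mindex \<Rightarrow> bool" where
  "Eg H a b \<longleftrightarrow> a \<noteq> b \<and> (a = zero_mi \<or> b = zero_mi \<or> (\<exists>i k. a = ei i \<and> b = ei k \<and> H i k))"

lemma Eg_ei: "Eg H (ei i) (ei k) \<longleftrightarrow> i \<noteq> k \<and> H i k"
  unfolding Eg_def by auto

lemma chordal_apex:
  assumes Hg: "is_graph n H" and Hch: "chordal n H"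
  shows "chordalS (mono_idx n 1 {..<n}) (Eg H)"
  unfolding chordalS_def
proof (intro allI impI)
  fix vs :: "mindex list"
  assume a: "distinct vs \<and> 4 \<le> length vs \<and> set vs \<subseteq> mono_idx n 1 {..<n} \<and>
       (\<forall>k<length vs. Eg H (vs ! k) (vs ! ((k + 1) mod length vs)))"
  then have dist: "distinct vs" and L4: "4 \<le> length vs" and sub: "set vs \<subseteq> mono_idx n 1 {..<n}"
    and cyc: "\<forall>k<length vs. Eg H (vs ! k) (vs ! ((k + 1) mod length vs))" by auto
  define L where "L = length vs"
  show "\<exists>k l. k < length vs \<and> l < length vs \<and> k \<noteq> l \<and> l \<noteq> (k + 1) mod length vs \<and>
       k \<noteq> (l + 1) mod length vs \<and> Eg H (vs ! k) (vs ! l)"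
  proof (cases "zero_mi \<in> set vs")
    case True
    then obtain p where p: "p < L" "vs ! p = zero_mi" unfolding L_def by (auto simp: in_set_conv_nth)
    define q where "q = (p + 2) mod L"
    note mf = mod_facts[OF L4[folded L_def] p(1), folded q_def]
    have "vs ! q \<noteq> vs ! p" using dist mf(1,2) p(1) unfolding L_def by (simp add: nth_eq_iff_index_eq)
    then have "Eg H (vs ! p) (vs ! q)" using p(2) unfolding Eg_def by simp
    then show ?thesis using mf p(1) unfolding L_def by blast
  next
    case False
    have ex: "\<forall>\<alpha>\<in>set vs. \<exists>i. i < n \<and> \<alpha> = ei i"
    proof
      fix \<alpha> assume "\<alpha> \<in> set vs"
      then have "\<alpha> \<in> mono_idx n 1 {..<n}" "\<alpha> \<noteq> zero_mi" using sub False by auto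
      then show "\<exists>i. i < n \<and> \<alpha> = ei i" using mono1_char by blast
    qed
    define ix where "ix = (\<lambda>\<alpha>. SOME i. i < n \<and> \<alpha> = ei i)"
    have ixp: "\<And>\<alpha>. \<alpha> \<in> set vs \<Longrightarrow> ix \<alpha> < n \<and> \<alpha> = ei (ix \<alpha>)"
      unfolding ix_def using ex by (metis (mono_tags, lifting) someI_ex)
    define ixs where "ixs = map ix vs"
    have lis: "length ixs = L" unfolding ixs_def L_def by simp
    have nth_is: "\<And>k. k < L \<Longrightarrow> vs ! k = ei (ixs ! k) \<and> ixs ! k < n"
      unfolding ixs_def L_def using ixp by auto
    have mapv: "map ei ixs = vs" by (rule nth_equalityI) (use lis nth_is L_def in auto)
    have dis: "distinct ixs" using dist mapv distinct_map by metis
    have setis: "set ixs \<subseteq> {..<n}" using nth_is lis by (auto simp: in_set_conv_nth)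
    have cycH: "\<forall>k<length ixs. H (ixs ! k) (ixs ! ((k + 1) mod length ixs))"
    proof (intro allI impI)
      fix k assume k: "k < length ixs"
      have k2: "(k + 1) mod L < L" using k lis by simp
      have "Eg H (vs ! k) (vs ! ((k + 1) mod L))" using cyc k lis unfolding L_def by simp
      then show "H (ixs ! k) (ixs ! ((k + 1) mod length ixs))"
        using nth_is[of k] nth_is[OF k2] k lis Eg_ei by simp
    qed
    obtain k l where kl: "k < length ixs" "l < length ixs" "k \<noteq> l" "l \<noteq> (k + 1) mod length ixs"
        "k \<noteq> (l + 1) mod length ixs" "H (ixs ! k) (ixs ! l)"
    proof -
      have "4 \<le> length ixs" using lis L4 unfolding L_def by simp
      then show ?thesis using Hch[unfolded chordal_def, rule_format, of "ixs"] dis setis cycH that by blast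
    qed
    have "ixs ! k \<noteq> ixs ! l" using Hg kl(6) unfolding is_graph_def by blast
    then have "Eg H (vs ! k) (vs ! l)" using nth_is[of k] nth_is[of l] kl lis Eg_ei by simp
    moreover have lv: "length ixs = length vs" using lis unfolding L_def .
    ultimately show ?thesis using kl(1-5)[unfolded lv] by blast
  qed
qed

lemma clique_cover:
  assumes Hg: "is_graph n H" and KS: "K \<subseteq> mono_idx n 1 {..<n}" and Kc: "clq (Eg H) K"
  shows "\<exists>I\<in>max_cliques n H. K \<subseteq> mono_idx n 1 I"
proof -
  define I0 where "I0 = {i. i < n \<and> ei i \<in> K}"
  have I0c: "is_clique n H I0" unfolding is_clique_def
  proof (intro conjI ballI impI)
    show "I0 \<subseteq> {..<n}" unfolding I0_def by auto
  next
    fix i j assume i: "i \<in> I0" and j: "j \<in> I0" and ij: "i \<noteq> j"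
    have "ei i \<noteq> ei j" using ij by simp
    then have "Eg H (ei i) (ei j)" using Kc i j unfolding clq_def I0_def by blast
    then show "H i j" using Eg_ei by blast
  qed
  define CL where "CL = {C. is_clique n H C}"
  have finCL: "finite CL"
  proof -
    have "CL \<subseteq> Pow {..<n}" unfolding CL_def is_clique_def by blast
    then show ?thesis using finite_subset by blast
  qed
  have I0CL: "I0 \<in> CL" unfolding CL_def using I0c by simp
  obtain I where I: "I \<in> CL" "I0 \<subseteq> I" and Imax: "\<forall>b\<in>CL. I \<subseteq> b \<longrightarrow> I = b"
    using finite_has_maximal2[OF finCL I0CL] by blast
  have Imc: "I \<in> max_cliques n H" unfolding max_cliques_def using I Imax unfolding CL_def by blast
  have In: "I \<subseteq> {..<n}" using I unfolding CL_def is_clique_def by blast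
  have "K \<subseteq> mono_idx n 1 I"
  proof
    fix \<alpha> assume a: "\<alpha> \<in> K"
    then have "\<alpha> = zero_mi \<or> (\<exists>i\<in>{..<n}. i < n \<and> \<alpha> = ei i)" using KS mono1_char by blast
    then show "\<alpha> \<in> mono_idx n 1 I"
    proof
      assume "\<alpha> = zero_mi" then show ?thesis using mono1_char by blast
    next
      assume "\<exists>i\<in>{..<n}. i < n \<and> \<alpha> = ei i"
      then obtain i where "i < n" "\<alpha> = ei i" by blast
      then have "i \<in> I" using a I(2) unfolding I0_def by blast
      then show ?thesis using mono1_char \<open>i < n\<close> \<open>\<alpha> = ei i\<close> by blast
    qed
  qed
  then show ?thesis using Imc by blast
qed

lemma supp_edge:
  assumes b: "b \<in> mono_idx n 1 {..<n}" and c: "c \<in> mono_idx n 1 {..<n}"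
    and hyp: "\<And>i k. i \<noteq> k \<Longrightarrow> i < n \<Longrightarrow> k < n \<Longrightarrow> {i, k} \<subseteq> msupp b \<union> msupp c \<Longrightarrow> H i k"
  shows "b = c \<or> Eg H b c"
proof (cases "b = c")
  case False
  show ?thesis
  proof (cases "b = zero_mi \<or> c = zero_mi")
    case True then show ?thesis using False unfolding Eg_def by blast
  next
    case nz: False
    obtain i where i: "i < n" "b = ei i" using b nz mono1_char by blast
    obtain k where k: "k < n" "c = ei k" using c nz mono1_char by blast
    have ik: "i \<noteq> k" using False i k by simp
    have "H i k" using hyp[OF ik i(1) k(1)] i k by simp
    then show ?thesis using i k ik Eg_ei by simp
  qed
qed simp

lemma half_deg1: "1 \<le> pdeg n p \<Longrightarrow> pdeg n p \<le> 2 \<Longrightarrow> half_deg n p = 1"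
  unfolding half_deg_def by (cases "pdeg n p = 1") auto

lemma Lfun_cong: "(\<And>bc. bc \<in> psupp p \<Longrightarrow> y' bc = y bc) \<Longrightarrow> Lfun y' p = Lfun y p"
  unfolding Lfun_def by (intro sum.cong refl) auto

theorem mainTheorem1:
  fixes n m :: nat and f :: cpoly and g :: "nat \<Rightarrow> cpoly"
    and H :: "nat \<Rightarrow> nat \<Rightarrow> bool" and asg :: "nat \<Rightarrow> nat set"
  assumes "is_cpoly n f" and "hermitian_poly f"
    and "\<forall>j\<in>{1..m}. is_cpoly n (g j) \<and> hermitian_poly (g j)"
    and "pdeg n f \<le> 2"
    and "\<forall>j\<in>{1..m}. 1 \<le> pdeg n (g j) \<and> pdeg n (g j) \<le> 2"
    and "chordal_extension n (csp_graph n f g m 1) H"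
    and "valid_assignment n g m 1 H asg"
  shows "rho_cs n f g m 1 H asg = rho_dense n f g m 1"
proof -
  have Hg: "is_graph n H" and Hsub: "\<And>i j. csp_graph n f g m 1 i j \<Longrightarrow> H i j" and Hch: "chordal n H"
    using assms(6) unfolding chordal_extension_def by auto
  have hd: "\<And>j. j \<in> {1..m} \<Longrightarrow> half_deg n (g j) = 1" using assms(5) half_deg1 by blast
  have JP: "Jprime n g m 1 = {1..m}" unfolding Jprime_def using hd by auto
  define S where "S = mono_idx n 1 {..<n}"
  have finS: "finite S" unfolding S_def by (rule finite_mono1)
  have zS: "zero_mi \<in> S" unfolding S_def using mono1_char by blast
  have symE: "\<forall>a b. Eg H a b \<longrightarrow> Eg H b a"
    using Hg unfolding is_graph_def Eg_def by blast
  have chE: "chordalS S (Eg H)" unfolding S_def by (rule chordal_apex[OF Hg Hch])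
  have fedge: "\<And>b c. (b, c) \<in> psupp f \<Longrightarrow> b \<in> S \<Longrightarrow> c \<in> S \<Longrightarrow> b = c \<or> Eg H b c"
  proof -
    fix b c assume bc: "(b, c) \<in> psupp f" and b: "b \<in> S" and c: "c \<in> S"
    show "b = c \<or> Eg H b c"
    proof (rule supp_edge[OF b[unfolded S_def] c[unfolded S_def]])
      fix i k assume ik: "i \<noteq> k" "i < n" "k < n" "{i, k} \<subseteq> msupp b \<union> msupp c"
      have mem: "(b, c) \<in> psupp f \<union> (\<Union>j\<in>Jprime n g m 1. psupp (g j))" using bc by blast
      have "\<exists>x\<in>psupp f \<union> (\<Union>j\<in>Jprime n g m 1. psupp (g j)). case x of (b, c) \<Rightarrow> {i, k} \<subseteq> msupp b \<union> msupp c"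
        by (rule bexI[OF _ mem]) (simp only: prod.case, rule ik(4))
      then have "csp_graph n f g m 1 i k" unfolding csp_graph_def using ik by blast
      then show "H i k" by (rule Hsub)
    qed
  qed
  have gedge: "\<And>j b c. j \<in> {1..m} \<Longrightarrow> (b, c) \<in> psupp (g j) \<Longrightarrow> b \<in> S \<Longrightarrow> c \<in> S \<Longrightarrow> b = c \<or> Eg H b c"
  proof -
    fix j b c assume j: "j \<in> {1..m}" and bc: "(b, c) \<in> psupp (g j)" and b: "b \<in> S" and c: "c \<in> S"
    show "b = c \<or> Eg H b c"
    proof (rule supp_edge[OF b[unfolded S_def] c[unfolded S_def]])
      fix i k assume ik: "i \<noteq> k" "i < n" "k < n" "{i, k} \<subseteq> msupp b \<union> msupp c"
      have mem: "(b, c) \<in> psupp f \<union> (\<Union>j\<in>Jprime n g m 1. psupp (g j))" using bc j JP by blast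
      have "\<exists>x\<in>psupp f \<union> (\<Union>j\<in>Jprime n g m 1. psupp (g j)). case x of (b, c) \<Rightarrow> {i, k} \<subseteq> msupp b \<union> msupp c"
        by (rule bexI[OF _ mem]) (simp only: prod.case, rule ik(4))
      then have "csp_graph n f g m 1 i k" unfolding csp_graph_def using ik by blast
      then show "H i k" by (rule Hsub)
    qed
  qed
  have d2c: "\<And>y. dense_feasible n f g m 1 y \<Longrightarrow> cs_feasible n f g m 1 H asg y"
  proof -
    fix y assume d: "dense_feasible n f g m 1 y"
    have herm: "hermitian_seq y" and y1: "y (zero_mi, zero_mi) = 1"
      and M: "loc_psd n 1 {..<n} one_poly y"
      and G: "\<forall>j\<in>{1..m}. loc_psd n (1 - half_deg n (g j)) {..<n} (g j) y"
      using d unfolding dense_feasible_def by auto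
    have MS: "psd_on S (\<lambda>b c. y (b, c))" using M unfolding loc_psd1 S_def .
    have cl: "\<forall>I\<in>max_cliques n H. loc_psd n 1 I one_poly y"
    proof
      fix I assume "I \<in> max_cliques n H"
      then have In: "I \<subseteq> {..<n}" unfolding max_cliques_def is_clique_def by blast
      have "mono_idx n 1 I \<subseteq> S" unfolding S_def mono_idx_def using In by blast
      then show "loc_psd n 1 I one_poly y" unfolding loc_psd1 using psd_on_subset[OF MS finS] by blast
    qed
    have gj: "\<forall>j\<in>Jprime n g m 1. Im (Lfun y (g j)) = 0 \<and> 0 \<le> Re (Lfun y (g j))"
    proof
      fix j assume "j \<in> Jprime n g m 1"
      then have j: "j \<in> {1..m}" using JP by simp
      then have "loc_psd n (1 - half_deg n (g j)) {..<n} (g j) y" using G by blast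
      then have "loc_psd n 0 {..<n} (g j) y" using hd[OF j] by simp
      then show "Im (Lfun y (g j)) = 0 \<and> 0 \<le> Re (Lfun y (g j))" unfolding loc_psd0 .
    qed
    show "cs_feasible n f g m 1 H asg y" unfolding cs_feasible_def
      using herm y1 cl gj JP by simp
  qed
  have c2d: "\<And>y. cs_feasible n f g m 1 H asg y \<Longrightarrow> \<exists>y'. dense_feasible n f g m 1 y' \<and> Lfun y' f = Lfun y f"
  proof -
    fix y assume cs: "cs_feasible n f g m 1 H asg y"
    have herm: "hermitian_seq y" and y1: "y (zero_mi, zero_mi) = 1"
      and cl: "\<forall>I\<in>max_cliques n H. loc_psd n 1 I one_poly y"
      and gj: "\<forall>j\<in>Jprime n g m 1. Im (Lfun y (g j)) = 0 \<and> 0 \<le> Re (Lfun y (g j))"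
      using cs unfolding cs_feasible_def by auto
    define A where "A = (\<lambda>b c. y (b, c))"
    have hyp: "\<forall>K. K \<subseteq> S \<and> clq (Eg H) K \<longrightarrow> psd_on K A"
    proof (intro allI impI)
      fix K assume K: "K \<subseteq> S \<and> clq (Eg H) K"
      then obtain I where I: "I \<in> max_cliques n H" "K \<subseteq> mono_idx n 1 I"
        using clique_cover[OF Hg] unfolding S_def by blast
      have "psd_on (mono_idx n 1 I) A" using cl I(1) unfolding loc_psd1 A_def by blast
      then show "psd_on K A" using psd_on_subset[OF _ finite_mono1 I(2)] by blast
    qed
    obtain A' where A': "psd_on S A'" and ag: "\<forall>a\<in>S. \<forall>b\<in>S. (a = b \<or> Eg H a b) \<longrightarrow> A' a b = A a b"
      using psd_completion[OF finS symE chE hyp] by blast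
    define y' where "y' = (\<lambda>bc. if fst bc \<in> S \<and> snd bc \<in> S then A' (fst bc) (snd bc) else y bc)"
    have agf: "Lfun y' f = Lfun y f"
    proof (rule Lfun_cong)
      fix bc assume bc: "bc \<in> psupp f"
      obtain b c where bcd: "bc = (b, c)" by (cases bc)
      show "y' bc = y bc"
      proof (cases "b \<in> S \<and> c \<in> S")
        case True
        then have "b = c \<or> Eg H b c" using fedge bc bcd by blast
        then have "A' b c = A b c" using ag True by blast
        then show ?thesis unfolding y'_def bcd A_def using True by simp
      next
        case False then show ?thesis unfolding y'_def bcd by auto
      qed
    qed
    have agg: "\<And>j. j \<in> {1..m} \<Longrightarrow> Lfun y' (g j) = Lfun y (g j)"
    proof -
      fix j assume j: "j \<in> {1..m}"
      show "Lfun y' (g j) = Lfun y (g j)"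
      proof (rule Lfun_cong)
        fix bc assume bc: "bc \<in> psupp (g j)"
        obtain b c where bcd: "bc = (b, c)" by (cases bc)
        show "y' bc = y bc"
        proof (cases "b \<in> S \<and> c \<in> S")
          case True
          then have "b = c \<or> Eg H b c" using gedge[OF j] bc bcd by blast
          then have "A' b c = A b c" using ag True by blast
          then show ?thesis unfolding y'_def bcd A_def using True by simp
        next
          case False then show ?thesis unfolding y'_def bcd by auto
        qed
      qed
    qed
    have herm': "hermitian_seq y'" unfolding hermitian_seq_def
    proof (intro allI)
      fix b c
      show "y' (b, c) = cnj (y' (c, b))"
      proof (cases "b \<in> S \<and> c \<in> S")
        case True
        then have "A' b c = cnj (A' c b)" using psd_on_herm[OF A'] by blast
        then show ?thesis unfolding y'_def using True by simp
      next
        case False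
        then have "\<not> (c \<in> S \<and> b \<in> S)" by blast
        moreover have "y (b, c) = cnj (y (c, b))" using herm unfolding hermitian_seq_def by blast
        ultimately show ?thesis unfolding y'_def using False by auto
      qed
    qed
    have y1': "y' (zero_mi, zero_mi) = 1"
    proof -
      have "A' zero_mi zero_mi = A zero_mi zero_mi" using ag zS by blast
      then show ?thesis unfolding y'_def A_def using zS y1 by simp
    qed
    have M': "loc_psd n 1 {..<n} one_poly y'"
    proof -
      have "psd_on S (\<lambda>b c. y' (b, c)) = psd_on S A'"
        by (rule psd_on_cong) (simp add: y'_def)
      then show ?thesis unfolding loc_psd1 S_def[symmetric] using A' by simp
    qed
    have G': "\<forall>j\<in>{1..m}. loc_psd n (1 - half_deg n (g j)) {..<n} (g j) y'"
    proof
      fix j assume j: "j \<in> {1..m}"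
      have "Im (Lfun y (g j)) = 0 \<and> 0 \<le> Re (Lfun y (g j))" using gj j JP by simp
      then show "loc_psd n (1 - half_deg n (g j)) {..<n} (g j) y'"
        unfolding hd[OF j] using agg[OF j] by (simp add: loc_psd0)
    qed
    have "dense_feasible n f g m 1 y'" unfolding dense_feasible_def using herm' y1' M' G' by blast
    then show "\<exists>y'. dense_feasible n f g m 1 y' \<and> Lfun y' f = Lfun y f" using agf by blast
  qed
  have setEq: "{ereal (Re (Lfun y f)) | y. cs_feasible n f g m 1 H asg y} =
      {ereal (Re (Lfun y f)) | y. dense_feasible n f g m 1 y}"
  proof
    show "{ereal (Re (Lfun y f)) | y. cs_feasible n f g m 1 H asg y} \<subseteq>
      {ereal (Re (Lfun y f)) | y. dense_feasible n f g m 1 y}"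
    proof
      fix r assume "r \<in> {ereal (Re (Lfun y f)) | y. cs_feasible n f g m 1 H asg y}"
      then obtain y where r: "r = ereal (Re (Lfun y f))" and cs: "cs_feasible n f g m 1 H asg y" by blast
      obtain y' where d': "dense_feasible n f g m 1 y'" and e': "Lfun y' f = Lfun y f" using c2d[OF cs] by blast
      have "r = ereal (Re (Lfun y' f))" using r e' by simp
      then show "r \<in> {ereal (Re (Lfun y f)) | y. dense_feasible n f g m 1 y}" using d' by blast
    qed
    show "{ereal (Re (Lfun y f)) | y. dense_feasible n f g m 1 y} \<subseteq>
      {ereal (Re (Lfun y f)) | y. cs_feasible n f g m 1 H asg y}"
      using d2c by blast
  qed
  show ?thesis unfolding rho_cs_def rho_dense_def setEq ..
qed

end
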